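(* Let $K$ be a field and $m,n,r$ positive integers. Let $R=K[x_{ij}^k \mid 1\le i\le m,\ 1\le j\le n,\ 1\le k\le r]$ and let $I_{mn}^r$ be the ideal generated by all $2$-minors of the horizontal concatenation $H=(X_1\ \cdots\ X_r)$ and all $2$-minors of the vertical concatenation $V$ of the $m\times n$ matrices $X_k=(x_{ij}^k)$. Fix a diagonal term order, and let $\Delta$ be the simplicial complex on the vertex set $\mathcal P=\{(i,j):1\le i\le m,\ 1\le j\le nr\}$ whose Stanley–Reisner ideal is $\operatorname{in}(I_{mn}^r)$, where the variable $x_{ij}^k$ is identified with the vertex $(i,(k-1)n+j)$. Then a subset $F\subseteq\mathcal P$ is a facet of $\Delta$ if and only if there exist integers $m=g_0\ge g_1\ge\cdots\ge g_{r-1}\ge g_r=1$ and $n=h_0\ge h_1\ge\cdots\ge h_{r-1}\ge h_r=1$ such that $F$ is the union of $r$ paths $$(g_{k-1},(k-1)n+h_k)\longrightarrow (g_k,(k-1)n+h_{k-1}),\qquad 1\le k\le r.$$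
   Context: A term order is diagonal if the leading term of every $2$-minor of $H$ and of $V$ is the product of the entries on its main diagonal. A path from $(g_1,h_1)$ to $(g_t,h_t)$, written $(g_1,h_1)\longrightarrow(g_t,h_t)$, is a subset $\{(g_1,h_1),\dots,(g_t,h_t)\}\subseteq\mathcal P$ with $(g_{s+1},h_{s+1})-(g_s,h_s)\in\{(-1,0),(0,1)\}$ for all $s=1,\dots,t-1$; a single point $(g,h)$ is regarded as the path $(g,h)\longrightarrow(g,h)$. *)

theory Defs
  imports Main "HOL-Library.Poly_Mapping"
begin

text \<open>Vertices / variables are pairs (i, c) of natural numbers; the variable
x_{ij}^k of the paper is identified with the variable indexed by the vertex
(i, (k-1)n + j).\<close>

type_synonym vtx = "nat \<times> nat"
type_synonym mon = "vtx \<Rightarrow>\<^sub>0 nat"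
type_synonym 'k mpoly = "mon \<Rightarrow>\<^sub>0 'k"

definition vertex_set :: "nat \<Rightarrow> nat \<Rightarrow> nat \<Rightarrow> vtx set" where
  "vertex_set m n r = {(i, c). 1 \<le> i \<and> i \<le> m \<and> 1 \<le> c \<and> c \<le> n * r}"

definition var :: "vtx \<Rightarrow> 'k::comm_ring_1 mpoly" where
  "var v = Poly_Mapping.single (Poly_Mapping.single v 1) 1"

definition mons_in :: "vtx set \<Rightarrow> mon set" where
  "mons_in V = {a. Poly_Mapping.keys a \<subseteq> V}"

definition poly_ring :: "vtx set \<Rightarrow> 'k::comm_ring_1 mpoly set" where
  "poly_ring V = {p. Poly_Mapping.keys p \<subseteq> mons_in V}"

inductive_set gen_ideal :: "vtx set \<Rightarrow> 'k::comm_ring_1 mpoly set \<Rightarrow> 'k mpoly set"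
  for V G where
  zero: "0 \<in> gen_ideal V G"
| step: "\<lbrakk> p \<in> gen_ideal V G; g \<in> G; q \<in> poly_ring V \<rbrakk> \<Longrightarrow> q * g + p \<in> gen_ideal V G"

definition term_order :: "vtx set \<Rightarrow> (mon \<Rightarrow> mon \<Rightarrow> bool) \<Rightarrow> bool" where
  "term_order V tle \<longleftrightarrow>
     (\<forall>a\<in>mons_in V. tle a a) \<and>
     (\<forall>a\<in>mons_in V. \<forall>b\<in>mons_in V. tle a b \<and> tle b a \<longrightarrow> a = b) \<and>
     (\<forall>a\<in>mons_in V. \<forall>b\<in>mons_in V. \<forall>c\<in>mons_in V. tle a b \<and> tle b c \<longrightarrow> tle a c) \<and>
     (\<forall>a\<in>mons_in V. \<forall>b\<in>mons_in V. tle a b \<or> tle b a) \<and>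
     (\<forall>a\<in>mons_in V. tle 0 a) \<and>
     (\<forall>a\<in>mons_in V. \<forall>b\<in>mons_in V. \<forall>c\<in>mons_in V. tle a b \<longrightarrow> tle (a + c) (b + c))"

definition lead_mon :: "(mon \<Rightarrow> mon \<Rightarrow> bool) \<Rightarrow> 'k::comm_ring_1 mpoly \<Rightarrow> mon" where
  "lead_mon tle p = (THE a. a \<in> Poly_Mapping.keys p \<and> (\<forall>b\<in>Poly_Mapping.keys p. tle b a))"

definition initial_ideal ::
  "vtx set \<Rightarrow> (mon \<Rightarrow> mon \<Rightarrow> bool) \<Rightarrow> 'k::comm_ring_1 mpoly set \<Rightarrow> 'k mpoly set" where
  "initial_ideal V tle I =
     gen_ideal V {Poly_Mapping.single (lead_mon tle f) 1 | f. f \<in> I \<and> f \<noteq> 0}"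

definition minor2 :: "(nat \<Rightarrow> nat \<Rightarrow> vtx) \<Rightarrow> nat \<Rightarrow> nat \<Rightarrow> nat \<Rightarrow> nat \<Rightarrow> 'k::comm_ring_1 mpoly" where
  "minor2 M a b c d = var (M a c) * var (M b d) - var (M a d) * var (M b c)"

text \<open>Horizontal concatenation H = (X_1 ... X_r), an m x nr matrix, and
vertical concatenation V, an mr x n matrix; entries are variable indices.\<close>
definition Hmat :: "nat \<Rightarrow> nat \<Rightarrow> nat \<Rightarrow> vtx" where
  "Hmat n i c = (i, c)"

definition Vmat :: "nat \<Rightarrow> nat \<Rightarrow> nat \<Rightarrow> nat \<Rightarrow> vtx" where
  "Vmat m n R j = (let k = (R - 1) div m + 1; i = (R - 1) mod m + 1 in (i, (k - 1) * n + j))"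

definition minor_idx :: "nat \<Rightarrow> nat \<Rightarrow> (nat \<times> nat \<times> nat \<times> nat) set" where
  "minor_idx p q = {(a, b, c, d). 1 \<le> a \<and> a < b \<and> b \<le> p \<and> 1 \<le> c \<and> c < d \<and> d \<le> q}"

definition minors_HV :: "nat \<Rightarrow> nat \<Rightarrow> nat \<Rightarrow> 'k::comm_ring_1 mpoly set" where
  "minors_HV m n r =
     {minor2 (Hmat n) a b c d | a b c d. (a, b, c, d) \<in> minor_idx m (n * r)} \<union>
     {minor2 (Vmat m n) a b c d | a b c d. (a, b, c, d) \<in> minor_idx (m * r) n}"

definition I_mnr :: "nat \<Rightarrow> nat \<Rightarrow> nat \<Rightarrow> 'k::comm_ring_1 mpoly set" where
  "I_mnr m n r = gen_ideal (vertex_set m n r) (minors_HV m n r)"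

definition diagonal_order ::
  "'k::comm_ring_1 itself \<Rightarrow> nat \<Rightarrow> nat \<Rightarrow> nat \<Rightarrow> (mon \<Rightarrow> mon \<Rightarrow> bool) \<Rightarrow> bool" where
  "diagonal_order (_ :: 'k itself) m n r tle \<longleftrightarrow>
     (\<forall>(a, b, c, d) \<in> minor_idx m (n * r).
        lead_mon tle (minor2 (Hmat n) a b c d :: 'k mpoly)
          = Poly_Mapping.single (Hmat n a c) 1 + Poly_Mapping.single (Hmat n b d) 1) \<and>
     (\<forall>(a, b, c, d) \<in> minor_idx (m * r) n.
        lead_mon tle (minor2 (Vmat m n) a b c d :: 'k mpoly)
          = Poly_Mapping.single (Vmat m n a c) 1 + Poly_Mapping.single (Vmat m n b d) 1)"

definition sqfree_mon :: "vtx set \<Rightarrow> 'k::comm_ring_1 mpoly" where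
  "sqfree_mon F = Poly_Mapping.single (\<Sum>v\<in>F. Poly_Mapping.single v 1) 1"

definition simplicial_complex :: "vtx set \<Rightarrow> vtx set set \<Rightarrow> bool" where
  "simplicial_complex P \<Delta> \<longleftrightarrow> {} \<in> \<Delta> \<and> (\<forall>F\<in>\<Delta>. F \<subseteq> P \<and> (\<forall>G. G \<subseteq> F \<longrightarrow> G \<in> \<Delta>))"

definition SR_ideal :: "vtx set \<Rightarrow> vtx set set \<Rightarrow> 'k::comm_ring_1 mpoly set" where
  "SR_ideal P \<Delta> = gen_ideal P {sqfree_mon F | F. F \<subseteq> P \<and> F \<notin> \<Delta>}"

definition facet :: "vtx set set \<Rightarrow> vtx set \<Rightarrow> bool" where
  "facet \<Delta> F \<longleftrightarrow> F \<in> \<Delta> \<and> (\<forall>G\<in>\<Delta>. F \<subseteq> G \<longrightarrow> G = F)"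

definition is_path :: "vtx set \<Rightarrow> vtx \<Rightarrow> vtx \<Rightarrow> vtx set \<Rightarrow> bool" where
  "is_path P a b S \<longleftrightarrow> (\<exists>ps. ps \<noteq> [] \<and> hd ps = a \<and> last ps = b \<and> set ps = S \<and> S \<subseteq> P \<and>
     (\<forall>s. s + 1 < length ps \<longrightarrow>
        (fst (ps ! (s + 1)) + 1 = fst (ps ! s) \<and> snd (ps ! (s + 1)) = snd (ps ! s)) \<or>
        (fst (ps ! (s + 1)) = fst (ps ! s) \<and> snd (ps ! (s + 1)) = snd (ps ! s) + 1)))"

end

theory Submission
  imports Defs "HOL-Library.Multiset"
begin


abbreviation lk where "lk \<equiv> Poly_Mapping.lookup"
abbreviation ks where "ks \<equiv> Poly_Mapping.keys"
abbreviation sg where "sg \<equiv> Poly_Mapping.single"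

lemma mons_in_add: "a \<in> mons_in V \<Longrightarrow> b \<in> mons_in V \<Longrightarrow> a + b \<in> mons_in V"
  unfolding mons_in_def using keys_add[of a b] by auto

lemma mons_in_zero[simp]: "0 \<in> mons_in V"
  unfolding mons_in_def by simp

lemma mons_in_single: "v \<in> V \<Longrightarrow> sg v k \<in> mons_in V"
  unfolding mons_in_def by simp

lemma poly_ring_add: "p \<in> poly_ring V \<Longrightarrow> q \<in> poly_ring V \<Longrightarrow> p + q \<in> poly_ring V"
  unfolding poly_ring_def using keys_add[of p q] by auto

lemma poly_ring_diff: "p \<in> poly_ring V \<Longrightarrow> q \<in> poly_ring V \<Longrightarrow> (p - q :: 'k::comm_ring_1 mpoly) \<in> poly_ring V"
  unfolding poly_ring_def using keys_diff[of p q] by auto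

lemma poly_ring_mult: "p \<in> poly_ring V \<Longrightarrow> q \<in> poly_ring V \<Longrightarrow> (p * q :: 'k::comm_ring_1 mpoly) \<in> poly_ring V"
  unfolding poly_ring_def using keys_mult[of p q] mons_in_add by fastforce

lemma poly_ring_single: "a \<in> mons_in V \<Longrightarrow> sg a c \<in> poly_ring V"
  unfolding poly_ring_def by simp

lemma poly_ring_one[simp]: "(1 :: 'k::comm_ring_1 mpoly) \<in> poly_ring V"
  unfolding poly_ring_def by simp


lemma gen_ideal_sub:
  assumes "G \<subseteq> poly_ring V"
  shows "gen_ideal V G \<subseteq> (poly_ring V :: 'k::comm_ring_1 mpoly set)"
proof
  fix p :: "'k mpoly" assume "p \<in> gen_ideal V G"
  then show "p \<in> poly_ring V"
  proof induct
    case zero then show ?case by (simp add: poly_ring_def)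
  next
    case (step p g q) then show ?case using assms by (meson poly_ring_add poly_ring_mult subsetD)
  qed
qed

lemma gen_ideal_gen: "g \<in> G \<Longrightarrow> (g :: 'k::comm_ring_1 mpoly) \<in> gen_ideal V G"
  using gen_ideal.step[OF gen_ideal.zero, of g G 1 V] by simp

lemma gen_ideal_mult:
  assumes "p \<in> gen_ideal V G" "q \<in> poly_ring V"
  shows "q * p \<in> gen_ideal V (G :: 'k::comm_ring_1 mpoly set)"
  using assms(1)
proof induct
  case zero then show ?case by (simp add: gen_ideal.zero)
next
  case (step p g q')
  have "q * (q' * g + p) = (q * q') * g + q * p" by (simp add: algebra_simps)
  then show ?case using step gen_ideal.step[of "q * p" V G g "q * q'"] poly_ring_mult[OF assms(2) step(4)] by simp
qed

lemma keys_mult_single: "ks (q * sg a (1::'k::comm_ring_1)) \<subseteq> {w + a | w. w \<in> ks q}"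
  using keys_mult[of q "sg a 1"] by auto

lemma monomial_ideal:
  assumes "p \<in> gen_ideal V G" "\<forall>g\<in>G. \<exists>a\<in>A. g = sg a (1::'k::comm_ring_1)" "b \<in> ks p"
  shows "\<exists>a\<in>A. \<exists>c. b = c + a"
  using assms(1,3)
proof (induct arbitrary: b)
  case zero then show ?case by simp
next
  case (step p g q)
  obtain a where a: "a \<in> A" "g = sg a 1" using assms(2) step(3) by auto
  from step(5) keys_add[of "q * g" p] have "b \<in> ks (q * g) \<or> b \<in> ks p" by auto
  then show ?case
  proof
    assume "b \<in> ks (q * g)"
    then obtain w where "b = w + a" using keys_mult_single[of q a] a by auto
    then show ?thesis using a by blast
  next
    assume "b \<in> ks p" then show ?thesis using step(2) by simp
  qed
qed


definition kf :: "nat \<Rightarrow> vtx \<Rightarrow> nat" where "kf n v = (snd v - 1) div n"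
definition jf :: "nat \<Rightarrow> vtx \<Rightarrow> nat" where "jf n v = (snd v - 1) mod n"
definition ms :: "mon \<Rightarrow> vtx multiset" where "ms w = Abs_multiset (lk w)"
definition deg :: "nat \<Rightarrow> mon \<Rightarrow> nat multiset \<times> nat multiset \<times> nat multiset" where
  "deg n w = (image_mset fst (ms w), image_mset (jf n) (ms w), image_mset (kf n) (ms w))"

lemma count_ms[simp]: "count (ms w) = lk w"
proof -
  have "{x. 0 < lk w x} = ks w" by (auto simp: in_keys_iff)
  then show ?thesis unfolding ms_def by (simp add: count_Abs_multiset)
qed

lemma set_ms[simp]: "set_mset (ms w) = ks w"
  by (auto simp: set_mset_def in_keys_iff)

lemma ms_add: "ms (a + b) = ms a + ms b"
  by (rule multiset_eqI) (simp add: lookup_add)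

lemma ms_single: "ms (sg v 1) = {#v#}"
  by (rule multiset_eqI) (simp add: lookup_single when_def)

lemma ms_inj: "ms a = ms b \<Longrightarrow> a = b"
  by (metis count_ms poly_mapping_eqI)

lemma deg_add_cong: "deg n a = deg n a' \<Longrightarrow> deg n (a + c) = deg n (a' + c)"
  by (simp add: deg_def ms_add)

definition Lf :: "nat \<Rightarrow> nat multiset \<times> nat multiset \<times> nat multiset \<Rightarrow> 'k::comm_ring_1 mpoly \<Rightarrow> 'k" where
  "Lf n d f = (\<Sum>a\<in>ks f. (if deg n a = d then lk f a else 0))"

lemma Lf_add: "Lf n d (f + g) = Lf n d f + Lf n d g"
  unfolding Lf_def by (rule setsum_keys_plus_distrib) auto

lemma Lf_zero[simp]: "Lf n d 0 = 0"
  unfolding Lf_def by simp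

lemma Lf_uminus: "Lf n d (- f) = - Lf n d f"
  unfolding Lf_def by (simp add: sum_negf[symmetric] if_distrib cong: if_cong)

lemma Lf_diff: "Lf n d (f - g) = Lf n d f - Lf n d g"
  using Lf_add[of n d f "- g"] Lf_uminus[of n d g] by simp

lemma Lf_sum: "finite I \<Longrightarrow> Lf n d (\<Sum>i\<in>I. f i) = (\<Sum>i\<in>I. Lf n d (f i))"
  by (induct I rule: finite_induct) (simp_all add: Lf_add)

lemma Lf_single: "Lf n d (sg a c) = (if deg n a = d then c else 0)"
  unfolding Lf_def by simp

lemma poly_expand: "(q::'k::comm_ring_1 mpoly) = (\<Sum>w\<in>ks q. sg w (lk q w))"
proof -
  have *: "finite I \<Longrightarrow> lk (\<Sum>i\<in>I. sg i (lk q i)) j = (if j \<in> I then lk q j else 0)" for I j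
    by (induction I rule: finite_induct) (auto simp: lookup_single lookup_add when_def)
  show ?thesis by (rule poly_mapping_eqI) (simp add: * in_keys_iff)
qed

lemma Lf_mult_single: "Lf n d (q * sg \<alpha> (1::'k::comm_ring_1)) = (\<Sum>w\<in>ks q. if deg n (w + \<alpha>) = d then lk q w else 0)"
proof -
  have "q * sg \<alpha> 1 = (\<Sum>w\<in>ks q. sg w (lk q w)) * sg \<alpha> 1" by (subst poly_expand[of q]) simp
  also have "\<dots> = (\<Sum>w\<in>ks q. sg (w + \<alpha>) (lk q w))" by (simp add: sum_distrib_right mult_single)
  finally show ?thesis by (simp add: Lf_sum Lf_single)
qed

lemma Lf_mult_binom:
  assumes "deg n \<alpha> = deg n \<beta>"
  shows "Lf n d (q * (sg \<alpha> 1 - sg \<beta> (1::'k::comm_ring_1))) = 0"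
proof -
  have "deg n (w + \<alpha>) = deg n (w + \<beta>)" for w using deg_add_cong[OF assms, of w] by (simp add: add.commute)
  then show ?thesis by (simp add: right_diff_distrib Lf_diff Lf_mult_single)
qed

lemma Lf_ideal:
  assumes "p \<in> gen_ideal V G"
    and "\<forall>g\<in>G. \<exists>\<alpha> \<beta>. deg n \<alpha> = deg n \<beta> \<and> g = sg \<alpha> 1 - sg \<beta> (1::'k::comm_ring_1)"
  shows "Lf n d p = 0"
  using assms(1)
proof induct
  case zero then show ?case by simp
next
  case (step p g q)
  then obtain \<alpha> \<beta> where "deg n \<alpha> = deg n \<beta>" "g = sg \<alpha> 1 - sg \<beta> 1" using assms(2) by blast
  then show ?case using step Lf_mult_binom[of n \<alpha> \<beta> d q] by (simp add: Lf_add)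
qed


context
  fixes V tle assumes TO: "term_order V tle"
begin
lemma tord_refl: "a \<in> mons_in V \<Longrightarrow> tle a a" using TO unfolding term_order_def by blast
lemma tord_antisym: "a \<in> mons_in V \<Longrightarrow> b \<in> mons_in V \<Longrightarrow> tle a b \<Longrightarrow> tle b a \<Longrightarrow> a = b"
  using TO unfolding term_order_def by blast
lemma tord_trans: "a \<in> mons_in V \<Longrightarrow> b \<in> mons_in V \<Longrightarrow> c \<in> mons_in V \<Longrightarrow> tle a b \<Longrightarrow> tle b c \<Longrightarrow> tle a c"
  using TO unfolding term_order_def by blast
lemma tord_total: "a \<in> mons_in V \<Longrightarrow> b \<in> mons_in V \<Longrightarrow> tle a b \<or> tle b a"
  using TO unfolding term_order_def by blast
lemma tord_mono: "a \<in> mons_in V \<Longrightarrow> b \<in> mons_in V \<Longrightarrow> c \<in> mons_in V \<Longrightarrow> tle a b \<Longrightarrow> tle (a + c) (b + c)"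
  using TO unfolding term_order_def by blast

lemma tord_min:
  assumes "finite S" "S \<noteq> {}" "S \<subseteq> mons_in V"
  shows "\<exists>w\<in>S. \<forall>x\<in>S. tle w x"
  using assms
proof (induct S rule: finite_ne_induct)
  case (singleton x) then show ?case using tord_refl by auto
next
  case (insert x F)
  then obtain w where w: "w \<in> F" "\<forall>y\<in>F. tle w y" by auto
  have xV: "x \<in> mons_in V" and FV: "F \<subseteq> mons_in V" using insert by auto
  have wV: "w \<in> mons_in V" using w FV by auto
  show ?case
  proof (cases "tle x w")
    case True
    have "\<forall>y\<in>F. tle x y"
    proof
      fix y assume "y \<in> F"
      then show "tle x y" using w True tord_trans[OF xV wV, of y] FV by auto
    qed
    then show ?thesis using tord_refl[OF xV] by auto
  next
    case False
    then show ?thesis using tord_total[OF xV wV] w by auto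
  qed
qed

lemma tord_max:
  assumes "finite S" "S \<noteq> {}" "S \<subseteq> mons_in V"
  shows "\<exists>w\<in>S. \<forall>x\<in>S. tle x w"
  using assms
proof (induct S rule: finite_ne_induct)
  case (singleton x) then show ?case using tord_refl by auto
next
  case (insert x F)
  then obtain w where w: "w \<in> F" "\<forall>y\<in>F. tle y w" by auto
  have xV: "x \<in> mons_in V" and FV: "F \<subseteq> mons_in V" using insert by auto
  have wV: "w \<in> mons_in V" using w FV by auto
  show ?case
  proof (cases "tle w x")
    case True
    have "\<forall>y\<in>F. tle y x"
    proof
      fix y assume "y \<in> F"
      then show "tle y x" using w True tord_trans[OF _ wV xV, of y] FV by auto
    qed
    then show ?thesis using tord_refl[OF xV] by auto
  next
    case False
    then show ?thesis using tord_total[OF xV wV] w by auto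
  qed
qed

lemma lead_mon_prop:
  assumes "f \<in> poly_ring V" "f \<noteq> 0"
  shows "lead_mon tle f \<in> ks f \<and> (\<forall>b\<in>ks f. tle b (lead_mon tle f))"
proof -
  have sub: "ks f \<subseteq> mons_in V" using assms(1) unfolding poly_ring_def by simp
  have ne: "ks f \<noteq> {}" using assms(2) by simp
  obtain w where w: "w \<in> ks f" "\<forall>x\<in>ks f. tle x w"
    using tord_max[OF finite_keys ne sub] by blast
  have uniq: "a = w" if "a \<in> ks f" "\<forall>b\<in>ks f. tle b a" for a
  proof -
    have "tle a w" "tle w a" using that w by simp_all
    moreover have "a \<in> mons_in V" "w \<in> mons_in V" using that(1) w(1) sub by (simp_all add: subset_iff)
    ultimately show ?thesis using tord_antisym by simp
  qed
  have "lead_mon tle f = w"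
    unfolding lead_mon_def
  proof (rule the_equality)
    show "w \<in> ks f \<and> (\<forall>b\<in>ks f. tle b w)" using w by simp
    show "\<And>a. a \<in> ks f \<and> (\<forall>b\<in>ks f. tle b a) \<Longrightarrow> a = w" using uniq by simp
  qed
  then show ?thesis using w by simp
qed
end

lemma var_mult: "var p * var q = sg (sg p 1 + sg q 1) (1::'k::comm_ring_1)"
  unfolding var_def by (simp add: mult_single)

lemma minor2_eq: "(minor2 M a b c d :: 'k::comm_ring_1 mpoly) =
   sg (sg (M a c) 1 + sg (M b d) 1) 1 - sg (sg (M a d) 1 + sg (M b c) 1) 1"
  unfolding minor2_def by (simp add: var_mult)

lemma keys_binom:
  assumes "X \<noteq> Y"
  shows "ks (sg X 1 - sg Y (1::'k::comm_ring_1)) = {X, Y}"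
  using assms by (auto simp: in_keys_iff lookup_minus lookup_single when_def split: if_splits)

lemma Vmat_coords:
  assumes "1 \<le> a" "1 \<le> c" "c \<le> n"
  shows "fst (Vmat m n a c) = (a - 1) mod m + 1"
    and "kf n (Vmat m n a c) = (a - 1) div m"
    and "jf n (Vmat m n a c) = c - 1"
    and "snd (Vmat m n a c) = (a - 1) div m * n + c"
proof -
  have s: "snd (Vmat m n a c) = (a - 1) div m * n + c"
    unfolding Vmat_def Let_def by simp
  show "fst (Vmat m n a c) = (a - 1) mod m + 1" unfolding Vmat_def Let_def by simp
  show "snd (Vmat m n a c) = (a - 1) div m * n + c" by (fact s)
  have e: "snd (Vmat m n a c) - 1 = (a - 1) div m * n + (c - 1)" using s assms by simp
  have "c - 1 < n" using assms by simp
  then show "kf n (Vmat m n a c) = (a - 1) div m" "jf n (Vmat m n a c) = c - 1"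
    unfolding kf_def jf_def e by simp_all
qed


definition dpH :: "nat \<Rightarrow> nat \<Rightarrow> nat \<Rightarrow> vtx \<Rightarrow> vtx \<Rightarrow> bool" where
  "dpH m n r p q \<longleftrightarrow> (\<exists>a b c d. (a, b, c, d) \<in> minor_idx m (n * r) \<and> p = Hmat n a c \<and> q = Hmat n b d)"
definition dpV :: "nat \<Rightarrow> nat \<Rightarrow> nat \<Rightarrow> vtx \<Rightarrow> vtx \<Rightarrow> bool" where
  "dpV m n r p q \<longleftrightarrow> (\<exists>a b c d. (a, b, c, d) \<in> minor_idx (m * r) n \<and> p = Vmat m n a c \<and> q = Vmat m n b d)"
definition dp :: "nat \<Rightarrow> nat \<Rightarrow> nat \<Rightarrow> vtx \<Rightarrow> vtx \<Rightarrow> bool" where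
  "dp m n r p q \<longleftrightarrow> dpH m n r p q \<or> dpV m n r p q"

lemma in_P: "(i, x) \<in> vertex_set m n r \<longleftrightarrow> 1 \<le> i \<and> i \<le> m \<and> 1 \<le> x \<and> x \<le> n * r"
  unfolding vertex_set_def by simp

lemma dpH_iff:
  assumes "p \<in> vertex_set m n r" "q \<in> vertex_set m n r"
  shows "dpH m n r p q \<longleftrightarrow> fst p < fst q \<and> snd p < snd q"
proof
  assume "dpH m n r p q"
  then show "fst p < fst q \<and> snd p < snd q" unfolding dpH_def minor_idx_def Hmat_def by auto
next
  assume "fst p < fst q \<and> snd p < snd q"
  then show "dpH m n r p q" using assms unfolding dpH_def minor_idx_def Hmat_def vertex_set_def
    by (cases p; cases q) auto
qed

lemma kf_bound:
  assumes "(i, x) \<in> vertex_set m n r"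
  shows "kf n (i, x) < r"
proof -
  have "x - 1 < n * r" using assms unfolding vertex_set_def by auto
  then show ?thesis unfolding kf_def by (simp add: less_mult_imp_div_less mult.commute)
qed

lemma snd_decomp:
  assumes "1 \<le> snd v"
  shows "snd v = kf n v * n + jf n v + 1"
  using assms unfolding kf_def jf_def by simp

lemma Vmat_in_P:
  assumes "1 \<le> m" "1 \<le> a" "a \<le> m * r" "1 \<le> c" "c \<le> n"
  shows "Vmat m n a c \<in> vertex_set m n r"
proof -
  have f: "fst (Vmat m n a c) = (a - 1) mod m + 1" and s: "snd (Vmat m n a c) = (a - 1) div m * n + c"
    using Vmat_coords assms by auto
  have md: "(a - 1) mod m < m" using assms by simp
  have "(a - 1) div m < r"
    using assms by (simp add: less_mult_imp_div_less mult.commute)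
  then have "(a - 1) div m * n + c \<le> n * r"
  proof -
    have "(a - 1) div m + 1 \<le> r" using \<open>(a - 1) div m < r\<close> by simp
    then have "((a - 1) div m + 1) * n \<le> r * n" by (rule mult_right_mono) simp
    then show ?thesis using assms by (simp add: algebra_simps)
  qed
  then show ?thesis using f s assms md unfolding vertex_set_def
    by (cases "Vmat m n a c") auto
qed

lemma dpV_imp:
  assumes "1 \<le> m" "dpV m n r p q"
  shows "(kf n p < kf n q \<or> (kf n p = kf n q \<and> fst p < fst q)) \<and> jf n p < jf n q"
proof -
  obtain a b c d where abcd: "(a, b, c, d) \<in> minor_idx (m * r) n" "p = Vmat m n a c" "q = Vmat m n b d"
    using assms unfolding dpV_def by blast
  then have r: "1 \<le> a" "a < b" "b \<le> m * r" "1 \<le> c" "c < d" "d \<le> n" unfolding minor_idx_def by auto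
  have cp: "fst p = (a - 1) mod m + 1" "kf n p = (a - 1) div m" "jf n p = c - 1"
    using Vmat_coords[of a c n m] r abcd by auto
  have cq: "fst q = (b - 1) mod m + 1" "kf n q = (b - 1) div m" "jf n q = d - 1"
    using Vmat_coords[of b d n m] r abcd by auto
  define A where "A = a - 1"
  define B where "B = b - 1"
  have AB: "A < B" using r unfolding A_def B_def by simp
  have le: "A div m \<le> B div m" using AB by (simp add: div_le_mono)
  have "A div m < B div m \<or> (A div m = B div m \<and> A mod m < B mod m)"
  proof (cases "A div m = B div m")
    case True
    have "A = m * (A div m) + A mod m" "B = m * (B div m) + B mod m" by simp_all
    moreover have "m * (A div m) = m * (B div m)" using True by simp
    ultimately have "A mod m < B mod m" using AB by linarith
    then show ?thesis using True by simp
  next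
    case False then show ?thesis using le by simp
  qed
  then show ?thesis using cp cq r unfolding A_def B_def by auto
qed

lemma dpV_intro:
  assumes "1 \<le> m" "1 \<le> n" "p \<in> vertex_set m n r" "q \<in> vertex_set m n r"
    and "kf n p < kf n q \<or> (kf n p = kf n q \<and> fst p < fst q)" "jf n p < jf n q"
  shows "dpV m n r p q"
proof -
  have gen: "Vmat m n (kf n v * m + fst v) (jf n v + 1) = v \<and> 1 \<le> kf n v * m + fst v \<and> kf n v * m + fst v \<le> m * r
     \<and> 1 \<le> jf n v + 1 \<and> jf n v + 1 \<le> n" if v: "v \<in> vertex_set m n r" for v
  proof -
    obtain i x where ix: "v = (i, x)" by (cases v)
    have b: "1 \<le> i" "i \<le> m" "1 \<le> x" "x \<le> n * r" using v ix unfolding vertex_set_def by auto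
    have kb: "kf n v < r" using kf_bound v ix by simp
    define a where "a = kf n v * m + i"
    have a1: "a - 1 = kf n v * m + (i - 1)" unfolding a_def using b by simp
    have m0: "0 < m" using b by simp
    obtain i' where i': "i = Suc i'" using b by (cases i) auto
    have "i' < m" using b i' by simp
    have a2: "a - 1 = i' + kf n v * m" using a1 i' by simp
    have "(i' + kf n v * m) div m = kf n v" "(i' + kf n v * m) mod m = i'"
      using \<open>i' < m\<close> m0 by simp_all
    then have "(a - 1) div m = kf n v" "(a - 1) mod m = i - 1" using a2 i' by simp_all
    moreover have "jf n v < n" unfolding jf_def using assms(2) by simp
    ultimately have V: "Vmat m n a (jf n v + 1) = (i, kf n v * n + jf n v + 1)"
      unfolding Vmat_def Let_def using b by simp
    have "snd v = kf n v * n + jf n v + 1" using snd_decomp[of v n] b ix by simp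
    then have "Vmat m n a (jf n v + 1) = v" using V ix by simp
    moreover have "a \<le> m * r"
    proof -
      have "kf n v + 1 \<le> r" using kb by simp
      then have "(kf n v + 1) * m \<le> r * m" by (rule mult_right_mono) simp
      then show ?thesis unfolding a_def using b by (simp add: algebra_simps)
    qed
    ultimately show ?thesis using b \<open>jf n v < n\<close> ix unfolding a_def by simp
  qed
  note gp = gen[OF assms(3)] and gq = gen[OF assms(4)]
  have "kf n p * m + fst p < kf n q * m + fst q"
  proof (cases "kf n p < kf n q")
    case True
    have "fst p \<le> m" "1 \<le> fst q" using assms(3,4) unfolding vertex_set_def by auto
    have "kf n p + 1 \<le> kf n q" using True by simp
    then have "(kf n p + 1) * m \<le> kf n q * m" by (rule mult_right_mono) simp
    then show ?thesis using \<open>fst p \<le> m\<close> \<open>1 \<le> fst q\<close> by (simp add: algebra_simps)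
  next
    case False then show ?thesis using assms(5) by simp
  qed
  then show ?thesis unfolding dpV_def minor_idx_def using gp gq assms(6)
    by (rule_tac x="kf n p * m + fst p" in exI, rule_tac x="kf n q * m + fst q" in exI,
        rule_tac x="jf n p + 1" in exI, rule_tac x="jf n q + 1" in exI) auto
qed

lemma dp_iff:
  assumes "1 \<le> m" "1 \<le> n" "p \<in> vertex_set m n r" "q \<in> vertex_set m n r"
  shows "dp m n r p q \<longleftrightarrow> (fst p < fst q \<and> snd p < snd q) \<or>
     ((kf n p < kf n q \<or> (kf n p = kf n q \<and> fst p < fst q)) \<and> jf n p < jf n q)"
  unfolding dp_def using dpH_iff[OF assms(3,4)] dpV_imp[OF assms(1)] dpV_intro[OF assms] by blast


definition NEfree :: "('a \<Rightarrow> nat) \<Rightarrow> ('a \<Rightarrow> nat) \<Rightarrow> 'a multiset \<Rightarrow> bool" where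
  "NEfree f1 f2 A \<longleftrightarrow> (\<forall>p\<in>#A. \<forall>q\<in>#A. \<not> (f1 p < f1 q \<and> f2 p < f2 q))"

lemma ne2_first:
  assumes "NEfree f1 f2 A" "A \<noteq> {#}"
  shows "\<exists>p\<in>#A. f1 p = Max (f1 ` set_mset A) \<and> f2 p = Min (f2 ` set_mset A)"
proof -
  define a0 where "a0 = Max (f1 ` set_mset A)"
  define S0 where "S0 = {p \<in> set_mset A. f1 p = a0}"
  have finA: "finite (set_mset A)" by simp
  have neA: "set_mset A \<noteq> {}" using assms(2) by simp
  have "a0 \<in> f1 ` set_mset A" unfolding a0_def using finA neA by (intro Max_in) auto
  then have S0ne: "S0 \<noteq> {}" unfolding S0_def by auto
  have finS0: "finite S0" unfolding S0_def by simp
  have "Min (f2 ` S0) \<in> f2 ` S0" using finS0 S0ne by (intro Min_in) auto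
  then obtain p where p: "p \<in> S0" "f2 p = Min (f2 ` S0)" by auto
  have pA: "p \<in># A" and fp: "f1 p = a0" using p unfolding S0_def by auto
  have "f2 p \<le> f2 q" if q: "q \<in># A" for q
  proof (cases "f1 q = a0")
    case True
    then have "q \<in> S0" unfolding S0_def using q by simp
    then show ?thesis using p finS0 by simp
  next
    case False
    have "f1 q \<le> a0" unfolding a0_def using q finA by simp
    then have "f1 q < f1 p" using False fp by simp
    then show ?thesis using assms(1) q pA unfolding NEfree_def by fastforce
  qed
  then have "Min (f2 ` set_mset A) = f2 p"
    using pA finA by (intro Min_eqI) auto
  then show ?thesis using pA fp unfolding a0_def by auto
qed

lemma NEfree_sub: "NEfree f1 f2 A \<Longrightarrow> B \<subseteq># A \<Longrightarrow> NEfree f1 f2 B"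
  unfolding NEfree_def by (meson mset_subset_eqD)

lemma ne2:
  assumes "NEfree f1 f2 A" "NEfree f1 f2 B"
    "image_mset f1 A = image_mset f1 B" "image_mset f2 A = image_mset f2 B"
  shows "image_mset (\<lambda>p. (f1 p, f2 p)) A = image_mset (\<lambda>p. (f1 p, f2 p)) B"
  using assms
proof (induction "size A" arbitrary: A B rule: less_induct)
  case less
  show ?case
  proof (cases "A = {#}")
    case True
    then have "B = {#}" using less.prems(3) by simp
    then show ?thesis using True by simp
  next
    case False
    then have BF: "B \<noteq> {#}" using less.prems(3) by auto
    obtain p where p: "p \<in># A" "f1 p = Max (f1 ` set_mset A)" "f2 p = Min (f2 ` set_mset A)"
      using ne2_first[OF less.prems(1) False] by blast
    obtain p' where p': "p' \<in># B" "f1 p' = Max (f1 ` set_mset B)" "f2 p' = Min (f2 ` set_mset B)"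
      using ne2_first[OF less.prems(2) BF] by blast
    have "f1 ` set_mset A = f1 ` set_mset B"
      using less.prems(3) by (metis set_image_mset)
    moreover have "f2 ` set_mset A = f2 ` set_mset B"
      using less.prems(4) by (metis set_image_mset)
    ultimately have e1: "f1 p = f1 p'" and e2: "f2 p = f2 p'" using p p' by auto
    define A' where "A' = A - {#p#}"
    define B' where "B' = B - {#p'#}"
    have A: "A = add_mset p A'" unfolding A'_def using p(1) by simp
    have B: "B = add_mset p' B'" unfolding B'_def using p'(1) by simp
    have "size A' < size A" using A by simp
    moreover have "NEfree f1 f2 A'" "NEfree f1 f2 B'"
      using NEfree_sub[OF less.prems(1), of A'] NEfree_sub[OF less.prems(2), of B'] A B by simp_all
    moreover have "image_mset f1 A' = image_mset f1 B'"
      using less.prems(3) A B e1 by simp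
    moreover have "image_mset f2 A' = image_mset f2 B'"
      using less.prems(4) A B e2 by simp
    ultimately have "image_mset (\<lambda>p. (f1 p, f2 p)) A' = image_mset (\<lambda>p. (f1 p, f2 p)) B'"
      using less.hyps by blast
    then show ?thesis using A B e1 e2 by simp
  qed
qed

lemma count_pair_filter:
  "count (image_mset snd (filter_mset (\<lambda>z. fst z = k) X)) y = count X (k, y)"
  by (induct X) auto

lemma pair_mset_eq:
  assumes "\<And>k. image_mset snd (filter_mset (\<lambda>z. fst z = k) X) = image_mset snd (filter_mset (\<lambda>z. fst z = k) Y)"
  shows "X = Y"
proof (rule multiset_eqI)
  fix z :: "'a \<times> 'b"
  obtain k y where z: "z = (k, y)" by (cases z)
  show "count X z = count Y z" using assms[of k] count_pair_filter[of k X y] count_pair_filter[of k Y y] z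
    by simp
qed

definition STD3 :: "('a \<Rightarrow> nat) \<Rightarrow> ('a \<Rightarrow> nat) \<Rightarrow> ('a \<Rightarrow> nat) \<Rightarrow> 'a multiset \<Rightarrow> bool" where
  "STD3 kk ii jj X \<longleftrightarrow> (\<forall>p\<in>#X. \<forall>q\<in>#X. \<not> (kk p < kk q \<and> ii p < ii q) \<and> \<not> (kk p < kk q \<and> jj p < jj q)
      \<and> (kk p = kk q \<longrightarrow> \<not> (ii p < ii q \<and> jj p < jj q)))"

lemma uniq3:
  assumes "STD3 kk ii jj M" "STD3 kk ii jj N"
    and "image_mset ii M = image_mset ii N" "image_mset jj M = image_mset jj N" "image_mset kk M = image_mset kk N"
    and inj: "\<And>z w. z \<in># M \<Longrightarrow> w \<in># N \<Longrightarrow> (kk z, ii z, jj z) = (kk w, ii w, jj w) \<Longrightarrow> z = w"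
  shows "M = N"
proof -
  have n1: "NEfree kk ii M" "NEfree kk ii N" "NEfree kk jj M" "NEfree kk jj N"
    using assms(1,2) unfolding STD3_def NEfree_def by simp_all
  have ki: "image_mset (\<lambda>p. (kk p, ii p)) M = image_mset (\<lambda>p. (kk p, ii p)) N"
    using ne2[OF n1(1,2) assms(5,3)] .
  have kj: "image_mset (\<lambda>p. (kk p, jj p)) M = image_mset (\<lambda>p. (kk p, jj p)) N"
    using ne2[OF n1(3,4) assms(5,4)] .
  have blk: "image_mset (\<lambda>p. (ii p, jj p)) (filter_mset (\<lambda>v. kk v = k) M)
           = image_mset (\<lambda>p. (ii p, jj p)) (filter_mset (\<lambda>v. kk v = k) N)" for k
  proof (rule ne2)
    show "NEfree ii jj (filter_mset (\<lambda>v. kk v = k) M)" "NEfree ii jj (filter_mset (\<lambda>v. kk v = k) N)"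
      using assms(1,2) unfolding STD3_def NEfree_def by simp_all
    have "image_mset ii (filter_mset (\<lambda>v. kk v = k) X) =
       image_mset snd (filter_mset (\<lambda>z. fst z = k) (image_mset (\<lambda>p. (kk p, ii p)) X))" for X
      by (simp add: filter_mset_image_mset image_mset.compositionality comp_def)
    then show "image_mset ii (filter_mset (\<lambda>v. kk v = k) M) = image_mset ii (filter_mset (\<lambda>v. kk v = k) N)"
      using ki by metis
    have "image_mset jj (filter_mset (\<lambda>v. kk v = k) X) =
       image_mset snd (filter_mset (\<lambda>z. fst z = k) (image_mset (\<lambda>p. (kk p, jj p)) X))" for X
      by (simp add: filter_mset_image_mset image_mset.compositionality comp_def)
    then show "image_mset jj (filter_mset (\<lambda>v. kk v = k) M) = image_mset jj (filter_mset (\<lambda>v. kk v = k) N)"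
      using kj by metis
  qed
  have T: "image_mset (\<lambda>v. (kk v, ii v, jj v)) M = image_mset (\<lambda>v. (kk v, ii v, jj v)) N"
  proof (rule pair_mset_eq)
    fix k
    have "image_mset snd (filter_mset (\<lambda>z. fst z = k) (image_mset (\<lambda>v. (kk v, ii v, jj v)) X)) =
        image_mset (\<lambda>p. (ii p, jj p)) (filter_mset (\<lambda>v. kk v = k) X)" for X
      by (simp add: filter_mset_image_mset image_mset.compositionality comp_def)
    then show "image_mset snd (filter_mset (\<lambda>z. fst z = k) (image_mset (\<lambda>v. (kk v, ii v, jj v)) M)) =
        image_mset snd (filter_mset (\<lambda>z. fst z = k) (image_mset (\<lambda>v. (kk v, ii v, jj v)) N))"
      using blk[of k] by metis
  qed
  show ?thesis using multiset.inj_map_strong[OF _ T] inj by blast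
qed


locale setting =
  fixes m n r :: nat and tle :: "mon \<Rightarrow> mon \<Rightarrow> bool" and Kt :: "'k::field itself"
  assumes m1: "1 \<le> m" and n1: "1 \<le> n" and r1: "1 \<le> r"
    and TO: "term_order (vertex_set m n r) tle"
    and DO: "diagonal_order Kt m n r tle"
begin

abbreviation "P \<equiv> vertex_set m n r"
abbreviation "ev v \<equiv> sg v (1::nat)"

lemma DO_H: "(a, b, c, d) \<in> minor_idx m (n * r) \<Longrightarrow>
  lead_mon tle (minor2 (Hmat n) a b c d :: 'k mpoly) = ev (Hmat n a c) + ev (Hmat n b d)"
  using DO unfolding diagonal_order_def by blast

lemma DO_V: "(a, b, c, d) \<in> minor_idx (m * r) n \<Longrightarrow>
  lead_mon tle (minor2 (Vmat m n) a b c d :: 'k mpoly) = ev (Vmat m n a c) + ev (Vmat m n b d)"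
  using DO unfolding diagonal_order_def by blast

lemma ms_pair: "ms (ev p + ev q) = {#p, q#}"
  unfolding ms_add ms_single by simp

lemma pair_neq: fixes p q p' q' :: vtx shows "p \<notin> {p', q'} \<Longrightarrow> ev p + ev q \<noteq> ev p' + ev q'"
proof
  assume "p \<notin> {p', q'}" "ev p + ev q = ev p' + ev q'"
  then have "ms (ev p + ev q) = ms (ev p' + ev q')" by simp
  then have "{#p, q#} = {#p', q'#}" unfolding ms_pair .
  moreover have "p \<in># {#p, q#}" by simp
  ultimately have "p \<in># {#p', q'#}" by simp
  then show False using \<open>p \<notin> {p', q'}\<close> by simp
qed

definition minor_ok :: "'k mpoly \<Rightarrow> mon \<Rightarrow> mon \<Rightarrow> bool" where
  "minor_ok g X Y \<longleftrightarrow> g = sg X 1 - sg Y 1 \<and> lead_mon tle g = X \<and> deg n X = deg n Y \<and> X \<noteq> Y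
     \<and> X \<in> mons_in P \<and> Y \<in> mons_in P"

lemma minorH_ok:
  assumes "(a, b, c, d) \<in> minor_idx m (n * r)"
  shows "minor_ok (minor2 (Hmat n) a b c d) (ev (a, c) + ev (b, d)) (ev (a, d) + ev (b, c))"
proof -
  have r: "1 \<le> a" "a < b" "b \<le> m" "1 \<le> c" "c < d" "d \<le> n * r" using assms unfolding minor_idx_def by auto
  then have inP: "(a, c) \<in> P" "(b, d) \<in> P" "(a, d) \<in> P" "(b, c) \<in> P" unfolding vertex_set_def by auto
  show ?thesis unfolding minor_ok_def
  proof (intro conjI)
    show "minor2 (Hmat n) a b c d = sg (ev (a, c) + ev (b, d)) 1 - sg (ev (a, d) + ev (b, c)) (1::'k)"
      by (simp add: minor2_eq Hmat_def)
    show "lead_mon tle (minor2 (Hmat n) a b c d :: 'k mpoly) = ev (a, c) + ev (b, d)"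
      using DO_H[OF assms] by (simp add: Hmat_def)
    show "deg n (ev (a, c) + ev (b, d)) = deg n (ev (a, d) + ev (b, c))"
      unfolding deg_def ms_pair by (simp add: jf_def kf_def add_mset_commute)
    show "ev (a, c) + ev (b, d) \<noteq> ev (a, d) + ev (b, c)" using r by (intro pair_neq) auto
    show "ev (a, c) + ev (b, d) \<in> mons_in P" "ev (a, d) + ev (b, c) \<in> mons_in P"
      using inP by (simp_all add: mons_in_add mons_in_single)
  qed
qed

lemma minorV_ok:
  assumes "(a, b, c, d) \<in> minor_idx (m * r) n"
  shows "minor_ok (minor2 (Vmat m n) a b c d) (ev (Vmat m n a c) + ev (Vmat m n b d)) (ev (Vmat m n a d) + ev (Vmat m n b c))"
proof -
  have r: "1 \<le> a" "a < b" "b \<le> m * r" "1 \<le> c" "c < d" "d \<le> n" using assms unfolding minor_idx_def by auto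
  then have inP: "Vmat m n a c \<in> P" "Vmat m n b d \<in> P" "Vmat m n a d \<in> P" "Vmat m n b c \<in> P"
    using Vmat_in_P[OF m1, of a r c n] Vmat_in_P[OF m1, of b r d n] Vmat_in_P[OF m1, of a r d n]
      Vmat_in_P[OF m1, of b r c n] by simp_all
  have a1: "1 \<le> a" "1 \<le> b" "1 \<le> c" "1 \<le> d" "c \<le> n" "d \<le> n" using r by simp_all
  note co = Vmat_coords[OF a1(1) a1(3) a1(5)] Vmat_coords[OF a1(2) a1(4) a1(6)]
    Vmat_coords[OF a1(1) a1(4) a1(6)] Vmat_coords[OF a1(2) a1(3) a1(5)]
  have ne1: "Vmat m n a c \<noteq> Vmat m n a d"
  proof
    assume eq: "Vmat m n a c = Vmat m n a d"
    have "jf n (Vmat m n a c) = c - 1" "jf n (Vmat m n a d) = d - 1" using co by simp_all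
    then have "c - 1 = d - 1" using eq by simp
    then show False using r by simp
  qed
  have ne2: "Vmat m n a c \<noteq> Vmat m n b c"
  proof
    assume eq: "Vmat m n a c = Vmat m n b c"
    have "fst (Vmat m n a c) = (a - 1) mod m + 1" "fst (Vmat m n b c) = (b - 1) mod m + 1"
      "kf n (Vmat m n a c) = (a - 1) div m" "kf n (Vmat m n b c) = (b - 1) div m" using co by simp_all
    then have "(a - 1) mod m = (b - 1) mod m" "(a - 1) div m = (b - 1) div m" using eq by simp_all
    then have "a - 1 = b - 1" by (metis div_mod_decomp)
    then show False using r by simp
  qed
  show ?thesis unfolding minor_ok_def
  proof (intro conjI)
    show "minor2 (Vmat m n) a b c d = sg (ev (Vmat m n a c) + ev (Vmat m n b d)) 1 - sg (ev (Vmat m n a d) + ev (Vmat m n b c)) (1::'k)"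
      by (simp add: minor2_eq)
    show "lead_mon tle (minor2 (Vmat m n) a b c d :: 'k mpoly) = ev (Vmat m n a c) + ev (Vmat m n b d)"
      using DO_V[OF assms] by simp
    have "fst (Vmat m n a c) = fst (Vmat m n a d)" "fst (Vmat m n b d) = fst (Vmat m n b c)"
      "kf n (Vmat m n a c) = kf n (Vmat m n a d)" "kf n (Vmat m n b d) = kf n (Vmat m n b c)"
      "jf n (Vmat m n a c) = jf n (Vmat m n b c)" "jf n (Vmat m n b d) = jf n (Vmat m n a d)"
      using co by simp_all
    then show "deg n (ev (Vmat m n a c) + ev (Vmat m n b d)) = deg n (ev (Vmat m n a d) + ev (Vmat m n b c))"
      unfolding deg_def ms_pair by (simp add: add_mset_commute)
    show "ev (Vmat m n a c) + ev (Vmat m n b d) \<noteq> ev (Vmat m n a d) + ev (Vmat m n b c)"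
      using ne1 ne2 by (intro pair_neq) auto
    show "ev (Vmat m n a c) + ev (Vmat m n b d) \<in> mons_in P" "ev (Vmat m n a d) + ev (Vmat m n b c) \<in> mons_in P"
      using inP by (simp_all add: mons_in_add mons_in_single)
  qed
qed

lemma minors_ok: "g \<in> (minors_HV m n r :: 'k mpoly set) \<Longrightarrow> \<exists>X Y. minor_ok g X Y"
  unfolding minors_HV_def using minorH_ok minorV_ok by blast

lemma dp_ok:
  assumes "dp m n r p q"
  shows "\<exists>g Y. g \<in> (minors_HV m n r :: 'k mpoly set) \<and> minor_ok g (ev p + ev q) Y"
proof -
  consider (H) "dpH m n r p q" | (V) "dpV m n r p q" using assms unfolding dp_def by blast
  then show ?thesis
  proof cases
    case H
    then obtain a b c d where abcd: "(a, b, c, d) \<in> minor_idx m (n * r)" "p = (a, c)" "q = (b, d)"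
      unfolding dpH_def Hmat_def by blast
    have "minor2 (Hmat n) a b c d \<in> (minors_HV m n r :: 'k mpoly set)"
      unfolding minors_HV_def using abcd(1) by blast
    then show ?thesis using minorH_ok[OF abcd(1)] abcd by blast
  next
    case V
    then obtain a b c d where abcd: "(a, b, c, d) \<in> minor_idx (m * r) n" "p = Vmat m n a c" "q = Vmat m n b d"
      unfolding dpV_def by blast
    have "minor2 (Vmat m n) a b c d \<in> (minors_HV m n r :: 'k mpoly set)"
      unfolding minors_HV_def using abcd(1) by blast
    then show ?thesis using minorV_ok[OF abcd(1)] abcd by blast
  qed
qed

end


lemma finite_P: "finite (vertex_set m n r)"
proof -
  have "vertex_set m n r \<subseteq> {1..m} \<times> {1..n * r}" unfolding vertex_set_def by auto
  then show ?thesis using finite_subset by blast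
qed

lemma kf_lt_snd:
  assumes "1 \<le> snd p" "1 \<le> snd q" "kf n p < kf n q" "1 \<le> n"
  shows "snd p < snd q"
proof -
  have p: "snd p = kf n p * n + jf n p + 1" and q: "snd q = kf n q * n + jf n q + 1"
    using snd_decomp assms by auto
  have "jf n p < n" unfolding jf_def using assms(4) by simp
  have "kf n p + 1 \<le> kf n q" using assms(3) by simp
  then have "(kf n p + 1) * n \<le> kf n q * n" by (rule mult_right_mono) simp
  then show ?thesis using p q \<open>jf n p < n\<close> by (simp add: algebra_simps)
qed

context setting
begin

definition std :: "mon \<Rightarrow> bool" where
  "std w \<longleftrightarrow> (\<forall>p\<in>ks w. \<forall>q\<in>ks w. \<not> dp m n r p q)"

lemma dp_neq: "p \<in> P \<Longrightarrow> q \<in> P \<Longrightarrow> dp m n r p q \<Longrightarrow> p \<noteq> q"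
  using dp_iff[OF m1 n1] by fastforce

lemma keys_sub: "w \<in> mons_in P \<Longrightarrow> v \<in> ks w \<Longrightarrow> v \<in> P"
  unfolding mons_in_def by auto

lemma swap:
  assumes w: "w \<in> mons_in P" and pq: "p \<in> ks w" "q \<in> ks w" "dp m n r p q"
  shows "\<exists>w'\<in>mons_in P. deg n w' = deg n w \<and> tle w' w \<and> w' \<noteq> w"
proof -
  have pP: "p \<in> P" and qP: "q \<in> P" using pq keys_sub w by auto
  have pq_ne: "p \<noteq> q" using dp_neq pP qP pq(3) by blast
  obtain g Y where gY: "g \<in> (minors_HV m n r :: 'k mpoly set)" "minor_ok g (ev p + ev q) Y"
    using dp_ok[OF pq(3)] by blast
  define X where "X = ev p + ev q"
  have ok: "g = sg X 1 - sg Y 1" "lead_mon tle g = X" "deg n X = deg n Y" "X \<noteq> Y"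
     "X \<in> mons_in P" "Y \<in> mons_in P" using gY(2) unfolding minor_ok_def X_def by auto
  define c where "c = w - X"
  have lX: "lk X v = (if v = p then 1 else 0) + (if v = q then 1 else 0)" for v
    unfolding X_def by (simp add: lookup_add lookup_single when_def eq_commute)
  have lw: "lk w p \<ge> 1" "lk w q \<ge> 1" using pq(1,2) by (simp_all add: in_keys_iff)
  have le: "lk X v \<le> lk w v" for v using lX[of v] lw pq_ne by auto
  have wX: "w = X + c"
    by (rule poly_mapping_eqI) (simp add: c_def lookup_add lookup_minus le)
  have cP: "c \<in> mons_in P"
  proof -
    have "ks c \<subseteq> ks w" unfolding c_def by (auto simp: in_keys_iff lookup_minus)
    then show ?thesis using w unfolding mons_in_def by auto
  qed
  have gR: "g \<in> poly_ring P" using ok by (simp add: poly_ring_diff poly_ring_single)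
  have kg: "ks g = {X, Y}" using ok keys_binom by simp
  then have g0: "g \<noteq> 0" by auto
  have "tle Y X" using lead_mon_prop[OF TO gR g0] ok(2) kg by auto
  then have t: "tle (Y + c) (X + c)" using tord_mono[OF TO ok(6) ok(5) cP] by simp
  have ne: "Y + c \<noteq> X + c" using ok(4) by simp
  have d: "deg n (Y + c) = deg n (X + c)" using deg_add_cong ok(3) by metis
  have "Y + c \<in> mons_in P" using ok(6) cP mons_in_add by blast
  then show ?thesis using t ne d wX by metis
qed

lemma std_uniq:
  assumes w: "w \<in> mons_in P" and u: "u \<in> mons_in P" and sw: "std w" and su: "std u"
    and dg: "deg n w = deg n u"
  shows "w = u"
proof -
  have S: "STD3 (kf n) fst (jf n) (ms x)" if x: "x \<in> mons_in P" "std x" for x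
    unfolding STD3_def
  proof (intro ballI conjI impI)
    fix p q assume p: "p \<in># ms x" and q: "q \<in># ms x"
    then have pk: "p \<in> ks x" and qk: "q \<in> ks x" by simp_all
    then have pP: "p \<in> P" and qP: "q \<in> P" using keys_sub x by auto
    have nd: "\<not> dp m n r p q" using sw x(2) pk qk unfolding std_def by blast
    have s1: "1 \<le> snd p" "1 \<le> snd q" using pP qP unfolding vertex_set_def by auto
    note di = dp_iff[OF m1 n1 pP qP]
    show "\<not> (kf n p < kf n q \<and> fst p < fst q)"
      using nd di kf_lt_snd[OF s1 _ n1] by blast
    show "\<not> (kf n p < kf n q \<and> jf n p < jf n q)" using nd di by blast
    show "kf n p = kf n q \<Longrightarrow> \<not> (fst p < fst q \<and> jf n p < jf n q)" using nd di by blast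
  qed
  have "ms w = ms u"
  proof (rule uniq3[OF S[OF w sw] S[OF u su]])
    show "image_mset fst (ms w) = image_mset fst (ms u)"
      "image_mset (jf n) (ms w) = image_mset (jf n) (ms u)"
      "image_mset (kf n) (ms w) = image_mset (kf n) (ms u)" using dg unfolding deg_def by simp_all
    fix z y assume z: "z \<in># ms w" and y: "y \<in># ms u" and e: "(kf n z, fst z, jf n z) = (kf n y, fst y, jf n y)"
    have "z \<in> P" "y \<in> P" using z y keys_sub w u by auto
    then have "1 \<le> snd z" "1 \<le> snd y" unfolding vertex_set_def by auto
    then have "snd z = snd y" using snd_decomp[of z n] snd_decomp[of y n] e by simp
    then show "z = y" using e by (simp add: prod_eq_iff)
  qed
  then show ?thesis by (rule ms_inj)
qed

end


context setting
begin

lemma fiber_finite: "finite {w \<in> mons_in P. deg n w = deg n u}"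
proof -
  define s where "s = size (ms u)"
  have sz: "size (ms w) = s" if "deg n w = deg n u" for w
  proof -
    have "image_mset fst (ms w) = image_mset fst (ms u)" using that unfolding deg_def by simp
    then have "size (image_mset fst (ms w)) = size (image_mset fst (ms u))" by simp
    then show ?thesis unfolding s_def by simp
  qed
  have "ms ` {w \<in> mons_in P. deg n w = deg n u} \<subseteq> mset ` {xs. set xs \<subseteq> P \<and> length xs = s}"
  proof
    fix M assume "M \<in> ms ` {w \<in> mons_in P. deg n w = deg n u}"
    then obtain w where w: "w \<in> mons_in P" "deg n w = deg n u" "M = ms w" by auto
    obtain xs where xs: "mset xs = M" using ex_mset by blast
    have "set xs = ks w" using xs w(3) set_ms[of w] set_mset_mset[of xs] by simp
    then have "set xs \<subseteq> P" using w(1) unfolding mons_in_def by simp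
    moreover have "length xs = s" using xs w(3) sz[OF w(2)] size_mset[of xs] by simp
    ultimately have xin: "xs \<in> {xs. set xs \<subseteq> P \<and> length xs = s}" by simp
    show "M \<in> mset ` {xs. set xs \<subseteq> P \<and> length xs = s}" using rev_image_eqI[OF xin, of M mset] xs by simp
  qed
  moreover have "finite (mset ` {xs. set xs \<subseteq> P \<and> length xs = s})"
    using finite_lists_length_eq[OF finite_P] by simp
  ultimately have "finite (ms ` {w \<in> mons_in P. deg n w = deg n u})"
    by (rule finite_subset)
  moreover have "inj_on ms {w \<in> mons_in P. deg n w = deg n u}"
    by (rule inj_onI) (rule ms_inj)
  ultimately show ?thesis by (rule finite_imageD)
qed

lemma fiber_min:
  assumes u: "u \<in> mons_in P" "std u" and u': "u' \<in> mons_in P" "deg n u' = deg n u"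
  shows "tle u u'"
proof -
  define \<Phi> where "\<Phi> = {w \<in> mons_in P. deg n w = deg n u}"
  have fin: "finite \<Phi>" unfolding \<Phi>_def by (rule fiber_finite)
  have ne: "\<Phi> \<noteq> {}" using u' unfolding \<Phi>_def by auto
  have sub: "\<Phi> \<subseteq> mons_in P" unfolding \<Phi>_def by auto
  obtain w0 where w0: "w0 \<in> \<Phi>" "\<forall>x\<in>\<Phi>. tle w0 x" using tord_min[OF TO fin ne sub] by blast
  have w0P: "w0 \<in> mons_in P" "deg n w0 = deg n u" using w0 unfolding \<Phi>_def by auto
  have "std w0"
  proof (rule ccontr)
    assume "\<not> std w0"
    then obtain p q where pq: "p \<in> ks w0" "q \<in> ks w0" "dp m n r p q" unfolding std_def by blast
    obtain w' where w': "w' \<in> mons_in P" "deg n w' = deg n w0" "tle w' w0" "w' \<noteq> w0"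
      using swap[OF w0P(1) pq] by blast
    have "w' \<in> \<Phi>" using w' w0P unfolding \<Phi>_def by simp
    then have "tle w0 w'" using w0 by blast
    then have "w' = w0" using tord_antisym[OF TO w'(1) w0P(1) w'(3)] by simp
    then show False using w'(4) by simp
  qed
  then have "w0 = u" using std_uniq[OF w0P(1) u(1) _ u(2) w0P(2)] by simp
  moreover have "u' \<in> \<Phi>" using u' unfolding \<Phi>_def by simp
  ultimately show ?thesis using w0 by blast
qed

lemma minors_sub: "(minors_HV m n r :: 'k mpoly set) \<subseteq> poly_ring P"
proof
  fix g :: "'k mpoly" assume "g \<in> minors_HV m n r"
  then obtain X Y where "minor_ok g X Y" using minors_ok by blast
  then show "g \<in> poly_ring P" unfolding minor_ok_def by (auto intro!: poly_ring_diff poly_ring_single)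
qed

lemma I_sub: "(I_mnr m n r :: 'k mpoly set) \<subseteq> poly_ring P"
  unfolding I_mnr_def using gen_ideal_sub[OF minors_sub] .

lemma lead_not_std:
  assumes f: "(f :: 'k mpoly) \<in> I_mnr m n r" "f \<noteq> 0"
  shows "\<not> std (lead_mon tle f)"
proof
  assume su: "std (lead_mon tle f)"
  define u where "u = lead_mon tle f"
  have fR: "f \<in> poly_ring P" using I_sub f(1) by blast
  have lu: "u \<in> ks f" "\<forall>b\<in>ks f. tle b u" using lead_mon_prop[OF TO fR f(2)] unfolding u_def by auto
  have ksP: "ks f \<subseteq> mons_in P" using fR unfolding poly_ring_def by simp
  have binoms: "\<forall>g\<in>(minors_HV m n r :: 'k mpoly set). \<exists>\<alpha> \<beta>. deg n \<alpha> = deg n \<beta> \<and> g = sg \<alpha> 1 - sg \<beta> 1"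
    using minors_ok unfolding minor_ok_def by blast
  have L0: "Lf n (deg n u) f = 0" using Lf_ideal[OF f(1)[unfolded I_mnr_def] binoms] .
  have "\<exists>a\<in>ks f. a \<noteq> u \<and> deg n a = deg n u"
  proof (rule ccontr)
    assume "\<not> ?thesis"
    then have z: "\<forall>a\<in>ks f - {u}. (if deg n a = deg n u then lk f a else 0) = 0" by auto
    have "Lf n (deg n u) f = (if deg n u = deg n u then lk f u else 0) +
        (\<Sum>a\<in>ks f - {u}. (if deg n a = deg n u then lk f a else 0))"
      unfolding Lf_def using lu(1) by (simp add: sum.remove)
    also have "\<dots> = lk f u" using z by simp
    finally have "lk f u = 0" using L0 by simp
    then show False using lu(1) by (simp add: in_keys_iff)
  qed
  then obtain a where a: "a \<in> ks f" "a \<noteq> u" "deg n a = deg n u" by blast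
  have uP: "u \<in> mons_in P" and aP: "a \<in> mons_in P" using lu(1) a(1) ksP by auto
  have "tle u a" using fiber_min[OF uP su[folded u_def] aP a(3)] .
  moreover have "tle a u" using lu(2) a(1) by blast
  ultimately have "a = u" using tord_antisym[OF TO aP uP] by simp
  then show False using a(2) by simp
qed

end


definition indep :: "nat \<Rightarrow> nat \<Rightarrow> nat \<Rightarrow> vtx set \<Rightarrow> bool" where
  "indep m n r F \<longleftrightarrow> (\<forall>p\<in>F. \<forall>q\<in>F. \<not> dp m n r p q)"

lemma sum_ev: "finite F \<Longrightarrow> lk (\<Sum>v\<in>F. sg v (1::nat)) x = (if x \<in> F then 1 else 0)"
  by (induct F rule: finite_induct) (auto simp: lookup_add lookup_single when_def)

lemma keys_sqfree: "ks (sqfree_mon F :: 'k::field mpoly) = {\<Sum>v\<in>F. sg v 1}"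
  unfolding sqfree_mon_def by simp

locale setting2 = setting m n r tle Kt for m n r tle and Kt :: "'k::field itself" +
  fixes \<Delta> :: "vtx set set"
  assumes SC: "simplicial_complex (vertex_set m n r) \<Delta>"
    and SR: "(SR_ideal (vertex_set m n r) \<Delta> :: 'k mpoly set) = initial_ideal (vertex_set m n r) tle (I_mnr m n r)"
begin

lemma delta_sub: "F \<in> \<Delta> \<Longrightarrow> F \<subseteq> P"
  using SC unfolding simplicial_complex_def by blast

lemma delta_closed: "F \<in> \<Delta> \<Longrightarrow> G \<subseteq> F \<Longrightarrow> G \<in> \<Delta>"
  using SC unfolding simplicial_complex_def by blast

lemma sumev_mons: "F \<subseteq> P \<Longrightarrow> (\<Sum>v\<in>F. ev v) \<in> mons_in P"
proof -
  assume F: "F \<subseteq> P"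
  then have fin: "finite F" using finite_P finite_subset by blast
  have "ks (\<Sum>v\<in>F. ev v) \<subseteq> F" using sum_ev[OF fin] by (auto simp: in_keys_iff split: if_splits)
  then show ?thesis using F unfolding mons_in_def by auto
qed

lemma SR_mem_nonface:
  assumes F: "F \<subseteq> P" and mem: "(sqfree_mon F :: 'k mpoly) \<in> SR_ideal P \<Delta>"
  shows "F \<notin> \<Delta>"
proof
  assume FD: "F \<in> \<Delta>"
  have fin: "finite F" using F finite_P finite_subset by blast
  define A0 where "A0 = {\<Sum>v\<in>G. ev v | G. G \<subseteq> P \<and> G \<notin> \<Delta>}"
  have gens: "\<forall>g\<in>{sqfree_mon G | G. G \<subseteq> P \<and> G \<notin> \<Delta>}. \<exists>a\<in>A0. g = sg a (1::'k)"
  proof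
    fix g :: "'k mpoly" assume "g \<in> {sqfree_mon G | G. G \<subseteq> P \<and> G \<notin> \<Delta>}"
    then obtain G where G: "g = sqfree_mon G" "G \<subseteq> P" "G \<notin> \<Delta>" by auto
    have "(\<Sum>v\<in>G. ev v) \<in> A0" unfolding A0_def using G(2,3) by auto
    then show "\<exists>a\<in>A0. g = sg a 1" using G(1) unfolding sqfree_mon_def by auto
  qed
  have "(\<Sum>v\<in>F. ev v) \<in> ks (sqfree_mon F :: 'k mpoly)" by (simp add: keys_sqfree)
  from monomial_ideal[OF mem[unfolded SR_ideal_def] gens this]
  obtain a c where a: "a \<in> A0" "(\<Sum>v\<in>F. ev v) = c + a" by auto
  then obtain G where G: "G \<subseteq> P" "G \<notin> \<Delta>" "a = (\<Sum>v\<in>G. ev v)" unfolding A0_def by auto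
  have finG: "finite G" using G finite_P finite_subset by blast
  have "G \<subseteq> F"
  proof
    fix v assume v: "v \<in> G"
    have "lk (\<Sum>v\<in>F. ev v) v = lk c v + lk a v" using a(2) by (simp add: lookup_add)
    moreover have "lk a v = 1" using G(3) sum_ev[OF finG] v by simp
    ultimately have "lk (\<Sum>v\<in>F. ev v) v \<ge> 1" by simp
    then show "v \<in> F" using sum_ev[OF fin] by (simp split: if_splits)
  qed
  then show False using delta_closed[OF FD, of G] G(2) by simp
qed

lemma face_indep:
  assumes FD: "F \<in> \<Delta>"
  shows "indep m n r F"
  unfolding indep_def
proof (intro ballI notI)
  fix p q assume p: "p \<in> F" and q: "q \<in> F" and d: "dp m n r p q"
  have F: "F \<subseteq> P" using delta_sub FD by simp
  have fin: "finite F" using F finite_P finite_subset by blast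
  have pq: "p \<noteq> q" using F p q by (intro dp_neq[OF _ _ d]) auto
  obtain g Y where gY: "g \<in> (minors_HV m n r :: 'k mpoly set)" "minor_ok g (ev p + ev q) Y"
    using dp_ok[OF d] by blast
  define X where "X = ev p + ev q"
  have ok: "g = sg X 1 - sg Y 1" "lead_mon tle g = X" "X \<noteq> Y"
    using gY(2) unfolding minor_ok_def X_def by auto
  have gI: "g \<in> I_mnr m n r" unfolding I_mnr_def using gen_ideal_gen[OF gY(1)] .
  have kg: "ks g = {X, Y}" using ok(1) keys_binom[OF ok(3)] by simp
  have g0: "g \<noteq> 0"
  proof
    assume "g = 0" then have "ks g = {}" by simp
    with kg show False by simp
  qed
  have mX: "sg X 1 \<in> initial_ideal P tle (I_mnr m n r :: 'k mpoly set)"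
    unfolding initial_ideal_def
  proof (rule gen_ideal_gen)
    have "sg X 1 = sg (lead_mon tle g) (1::'k) \<and> g \<in> I_mnr m n r \<and> g \<noteq> 0" using gI g0 ok(2) by simp
    then show "sg X 1 \<in> {sg (lead_mon tle f) (1::'k) |f. (f::'k mpoly) \<in> I_mnr m n r \<and> f \<noteq> 0}"
      by (intro CollectI exI[of _ g]) simp
  qed
  define G where "G = F - {p} - {q}"
  have GP: "G \<subseteq> P" using F unfolding G_def by auto
  have sF: "(\<Sum>v\<in>F. ev v) = (\<Sum>v\<in>G. ev v) + X"
  proof -
    have "(\<Sum>v\<in>F. ev v) = ev p + (\<Sum>v\<in>F - {p}. ev v)" using sum.remove[of F p "\<lambda>v. ev v"] fin p by simp
    also have "(\<Sum>v\<in>F - {p}. ev v) = ev q + (\<Sum>v\<in>F - {p} - {q}. ev v)"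
      using sum.remove[of "F - {p}" q "\<lambda>v. ev v"] fin q pq by simp
    finally show ?thesis unfolding G_def X_def by (simp add: algebra_simps)
  qed
  have "(sqfree_mon F :: 'k mpoly) = sg (\<Sum>v\<in>G. ev v) 1 * sg X 1"
    unfolding sqfree_mon_def sF by (simp add: mult_single)
  moreover have "sg (\<Sum>v\<in>G. ev v) 1 * sg X (1::'k) \<in> initial_ideal P tle (I_mnr m n r)"
  proof -
    have R: "sg (\<Sum>v\<in>G. ev v) (1::'k) \<in> poly_ring P" by (rule poly_ring_single[OF sumev_mons[OF GP]])
    show ?thesis using gen_ideal_mult[OF mX[unfolded initial_ideal_def] R] unfolding initial_ideal_def .
  qed
  ultimately have "(sqfree_mon F :: 'k mpoly) \<in> SR_ideal P \<Delta>" using SR by simp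
  then show False using SR_mem_nonface[OF F] FD by blast
qed

lemma indep_face:
  assumes F: "F \<subseteq> P" and ind: "indep m n r F"
  shows "F \<in> \<Delta>"
proof (rule ccontr)
  assume nF: "F \<notin> \<Delta>"
  have fin: "finite F" using F finite_P finite_subset by blast
  have "(sqfree_mon F :: 'k mpoly) \<in> SR_ideal P \<Delta>"
    unfolding SR_ideal_def by (rule gen_ideal_gen) (use F nF in auto)
  then have mem: "(sqfree_mon F :: 'k mpoly) \<in> initial_ideal P tle (I_mnr m n r)" using SR by simp
  define A0 where "A0 = {lead_mon tle f | f. f \<in> (I_mnr m n r :: 'k mpoly set) \<and> f \<noteq> 0}"
  have gens: "\<forall>g\<in>{sg (lead_mon tle f) 1 | f. f \<in> (I_mnr m n r :: 'k mpoly set) \<and> f \<noteq> 0}. \<exists>a\<in>A0. g = sg a (1::'k)"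
  proof
    fix g :: "'k mpoly" assume "g \<in> {sg (lead_mon tle f) 1 | f. f \<in> (I_mnr m n r :: 'k mpoly set) \<and> f \<noteq> 0}"
    then obtain f :: "'k mpoly" where f: "g = sg (lead_mon tle f) 1" "f \<in> I_mnr m n r" "f \<noteq> 0" by auto
    have "lead_mon tle f \<in> A0" unfolding A0_def using f(2,3) by auto
    then show "\<exists>a\<in>A0. g = sg a 1" using f(1) by auto
  qed
  have "(\<Sum>v\<in>F. ev v) \<in> ks (sqfree_mon F :: 'k mpoly)" by (simp add: keys_sqfree)
  from monomial_ideal[OF mem[unfolded initial_ideal_def] gens this]
  obtain a c where a: "a \<in> A0" "(\<Sum>v\<in>F. ev v) = c + a" by auto
  then obtain f :: "'k mpoly" where f: "f \<in> I_mnr m n r" "f \<noteq> 0" "a = lead_mon tle f" unfolding A0_def by auto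
  have kF: "ks a \<subseteq> F"
  proof
    fix v assume v: "v \<in> ks a"
    have "lk (\<Sum>v\<in>F. ev v) v = lk c v + lk a v" using a(2) by (simp add: lookup_add)
    moreover have "lk a v \<ge> 1" using v by (simp add: in_keys_iff)
    ultimately have "lk (\<Sum>v\<in>F. ev v) v \<ge> 1" by simp
    then show "v \<in> F" using sum_ev[OF fin] by (simp split: if_splits)
  qed
  have "std a" unfolding std_def
  proof (intro ballI)
    fix p q assume "p \<in> ks a" "q \<in> ks a"
    then have "p \<in> F" "q \<in> F" using kF by auto
    then show "\<not> dp m n r p q" using ind unfolding indep_def by simp
  qed
  then show False using lead_not_std[OF f(1,2)] f(3) by simp
qed

lemma delta_char: "F \<in> \<Delta> \<longleftrightarrow> F \<subseteq> P \<and> indep m n r F"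
  using delta_sub[of F] face_indep[of F] indep_face[of F] by auto

end


definition stp :: "vtx \<Rightarrow> vtx \<Rightarrow> bool" where
  "stp p q \<longleftrightarrow> (fst q + 1 = fst p \<and> snd q = snd p) \<or> (fst q = fst p \<and> snd q = snd p + 1)"

definition chainl :: "vtx list \<Rightarrow> bool" where
  "chainl ps \<longleftrightarrow> (\<forall>s. s + 1 < length ps \<longrightarrow> stp (ps ! s) (ps ! (s + 1)))"

lemma chainl_single[simp]: "chainl [x]"
  unfolding chainl_def by simp

lemma chainl_Cons2: "chainl (p # q # rest) \<longleftrightarrow> stp p q \<and> chainl (q # rest)"
proof
  assume h: "chainl (p # q # rest)"
  have "stp p q" using h[unfolded chainl_def, rule_format, of 0] by simp
  moreover have "chainl (q # rest)" unfolding chainl_def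
  proof (intro allI impI)
    fix s assume "s + 1 < length (q # rest)"
    then show "stp ((q # rest) ! s) ((q # rest) ! (s + 1))"
      using h[unfolded chainl_def, rule_format, of "Suc s"] by simp
  qed
  ultimately show "stp p q \<and> chainl (q # rest)" by simp
next
  assume h: "stp p q \<and> chainl (q # rest)"
  show "chainl (p # q # rest)" unfolding chainl_def
  proof (intro allI impI)
    fix s assume s: "s + 1 < length (p # q # rest)"
    show "stp ((p # q # rest) ! s) ((p # q # rest) ! (s + 1))"
    proof (cases s)
      case 0 then show ?thesis using h by simp
    next
      case (Suc s')
      then show ?thesis using h[THEN conjunct2, unfolded chainl_def, rule_format, of s'] s by simp
    qed
  qed
qed

lemma chainl_tl: "chainl (p # rest) \<Longrightarrow> chainl rest"
  by (cases rest) (auto simp: chainl_Cons2 chainl_def)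

lemma path_box:
  assumes "chainl ps" "ps \<noteq> []" "v \<in> set ps"
  shows "fst v \<le> fst (hd ps) \<and> snd (hd ps) \<le> snd v \<and> fst (last ps) \<le> fst v \<and> snd v \<le> snd (last ps)"
  using assms
proof (induction ps arbitrary: v)
  case Nil then show ?case by simp
next
  case (Cons p rest)
  show ?case
  proof (cases rest)
    case Nil then show ?thesis using Cons by simp
  next
    case (Cons q rest')
    have st: "stp p q" and ch: "chainl rest" using Cons.prems(1) \<open>rest = q # rest'\<close> by (simp_all add: chainl_Cons2)
    have hq: "hd rest = q" using \<open>rest = q # rest'\<close> by simp
    have IH: "\<And>u. u \<in> set rest \<Longrightarrow> fst u \<le> fst q \<and> snd q \<le> snd u \<and> fst (last rest) \<le> fst u \<and> snd u \<le> snd (last rest)"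
      using Cons.IH[OF ch] \<open>rest = q # rest'\<close> by auto
    have qb: "fst (last rest) \<le> fst q" "snd q \<le> snd (last rest)" using IH[of q] \<open>rest = q # rest'\<close> by auto
    have pq: "fst q \<le> fst p" "snd p \<le> snd q" using st unfolding stp_def by auto
    have lst: "last (p # rest) = last rest" using \<open>rest = q # rest'\<close> by simp
    show ?thesis
    proof (cases "v = p")
      case True then show ?thesis using qb pq lst by simp
    next
      case False
      then have "v \<in> set rest" using Cons.prems(3) by simp
      then show ?thesis using IH[of v] pq lst by auto
    qed
  qed
qed

lemma path_chain:
  assumes "chainl ps" "v \<in> set ps" "w \<in> set ps"
  shows "\<not> (fst v < fst w \<and> snd v < snd w)"
  using assms
proof (induction ps arbitrary: v w)
  case Nil then show ?case by simp
next
  case (Cons p rest)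
  show ?case
  proof (cases rest)
    case Nil then show ?thesis using Cons by simp
  next
    case (Cons q rest')
    have st: "stp p q" and ch: "chainl rest" using Cons.prems(1) \<open>rest = q # rest'\<close> by (simp_all add: chainl_Cons2)
    have pq: "fst q \<le> fst p" "snd p \<le> snd q" using st unfolding stp_def by auto
    have box: "\<And>u. u \<in> set rest \<Longrightarrow> fst u \<le> fst q \<and> snd q \<le> snd u"
      using path_box[OF ch] \<open>rest = q # rest'\<close> by fastforce
    show ?thesis
    proof (cases "v = p")
      case True
      show ?thesis
      proof (cases "w = p")
        case False
        then have "w \<in> set rest" using Cons.prems(3) by simp
        then show ?thesis using box[of w] pq True by auto
      qed (use True in simp)
    next
      case False
      then have vr: "v \<in> set rest" using Cons.prems(2) by simp
      show ?thesis
      proof (cases "w = p")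
        case True
        then show ?thesis using box[OF vr] pq by auto
      next
        case False
        then have "w \<in> set rest" using Cons.prems(3) by simp
        then show ?thesis using Cons.IH[OF ch vr] by simp
      qed
    qed
  qed
qed


lemma path_gap:
  assumes "chainl ps" "ps \<noteq> []" "hd ps = (a, c)" "last ps = (b, d)"
    "b \<le> i" "i \<le> a" "c \<le> y" "y \<le> d" "(i, y) \<notin> set ps"
  shows "\<exists>w\<in>set ps. (fst w < i \<and> snd w < y) \<or> (i < fst w \<and> y < snd w)"
  using assms
proof (induction ps arbitrary: a c)
  case Nil then show ?case by simp
next
  case (Cons p rest)
  have p: "p = (a, c)" using Cons.prems(3) by simp
  show ?case
  proof (cases rest)
    case Nil
    then have "(a, c) = (b, d)" using Cons.prems(3,4) by simp
    then have "(i, y) = p" using p Cons.prems(5-8) by simp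
    then show ?thesis using Cons.prems(9) by simp
  next
    case (Cons q rest')
    have st: "stp p q" and ch: "chainl rest" using Cons.prems(1) \<open>rest = q # rest'\<close> by (simp_all add: chainl_Cons2)
    have hq: "hd rest = q" "rest \<noteq> []" using \<open>rest = q # rest'\<close> by simp_all
    have lr: "last rest = (b, d)" using Cons.prems(4) \<open>rest = q # rest'\<close> by simp
    have nin: "(i, y) \<notin> set rest" using Cons.prems(9) by simp
    have qin: "q \<in> set (p # rest)" using \<open>rest = q # rest'\<close> by simp
    consider (down) "fst q + 1 = a" "snd q = c" | (right) "fst q = a" "snd q = c + 1"
      using st p unfolding stp_def by auto
    then show ?thesis
    proof cases
      case down
      show ?thesis
      proof (cases "i \<le> fst q")
        case True
        have "q = (fst q, c)" using down by (simp add: prod_eq_iff)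
        then obtain w where "w \<in> set rest" "(fst w < i \<and> snd w < y) \<or> (i < fst w \<and> y < snd w)"
          using Cons.IH[OF ch hq(2) _ lr Cons.prems(5) True Cons.prems(7,8) nin] hq(1) \<open>q = (fst q, c)\<close> by auto
        then show ?thesis by auto
      next
        case False
        then have "i = a" using down Cons.prems(6) by simp
        then have "y \<noteq> c" using p Cons.prems(9) by auto
        then have "c < y" using Cons.prems(7) by simp
        then show ?thesis using qin down \<open>i = a\<close> by force
      qed
    next
      case right
      show ?thesis
      proof (cases "snd q \<le> y")
        case True
        have "q = (a, snd q)" using right by (simp add: prod_eq_iff)
        then obtain w where "w \<in> set rest" "(fst w < i \<and> snd w < y) \<or> (i < fst w \<and> y < snd w)"
          using Cons.IH[OF ch hq(2) _ lr Cons.prems(5,6) True Cons.prems(8) nin] hq(1) \<open>q = (a, snd q)\<close> by auto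
        then show ?thesis by auto
      next
        case False
        then have "y = c" using right Cons.prems(7) by simp
        then have "i \<noteq> a" using p Cons.prems(9) by auto
        then have "i < a" using Cons.prems(6) by simp
        then show ?thesis using qin right \<open>y = c\<close> by force
      qed
    qed
  qed
qed

lemma path_fill:
  assumes "\<forall>v\<in>C. b \<le> fst v \<and> fst v \<le> a \<and> c \<le> snd v \<and> snd v \<le> d"
    "\<forall>v\<in>C. \<forall>w\<in>C. \<not> (fst v < fst w \<and> snd v < snd w)" "b \<le> a" "c \<le> d"
  shows "\<exists>ps. chainl ps \<and> ps \<noteq> [] \<and> hd ps = (a, c) \<and> last ps = (b, d) \<and> C \<subseteq> set ps \<and>
     (\<forall>v\<in>set ps. b \<le> fst v \<and> fst v \<le> a \<and> c \<le> snd v \<and> snd v \<le> d)"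
  using assms
proof (induction "(a - b) + (d - c)" arbitrary: a c C rule: less_induct)
  case less
  show ?case
  proof (cases "a = b \<and> c = d")
    case True
    have "C \<subseteq> {(a, c)}" using less.prems(1) True by (auto simp: prod_eq_iff)
    then show ?thesis using True by (intro exI[of _ "[(a, c)]"]) auto
  next
    case False
    define C' where "C' = C - {(a, c)}"
    have NE': "\<forall>v\<in>C'. \<forall>w\<in>C'. \<not> (fst v < fst w \<and> snd v < snd w)" using less.prems(2) unfolding C'_def by auto
    show ?thesis
    proof (cases "b < a \<and> (\<forall>v\<in>C. fst v = a \<longrightarrow> snd v \<le> c)")
      case True
      have box: "\<forall>v\<in>C'. b \<le> fst v \<and> fst v \<le> a - 1 \<and> c \<le> snd v \<and> snd v \<le> d"
      proof
        fix v assume v: "v \<in> C'"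
        then have vC: "v \<in> C" "v \<noteq> (a, c)" unfolding C'_def by auto
        have "fst v \<noteq> a"
        proof
          assume "fst v = a"
          then have "snd v = c" using True vC(1) less.prems(1) by force
          then show False using vC(2) \<open>fst v = a\<close> by (simp add: prod_eq_iff)
        qed
        then show "b \<le> fst v \<and> fst v \<le> a - 1 \<and> c \<le> snd v \<and> snd v \<le> d" using less.prems(1) vC(1) by force
      qed
      have lt: "(a - 1 - b) + (d - c) < (a - b) + (d - c)" using True by arith
      obtain ps where ps: "chainl ps" "ps \<noteq> []" "hd ps = (a - 1, c)" "last ps = (b, d)" "C' \<subseteq> set ps"
          "\<forall>v\<in>set ps. b \<le> fst v \<and> fst v \<le> a - 1 \<and> c \<le> snd v \<and> snd v \<le> d"
      proof -
        have ba: "b \<le> a - 1" using True by arith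
        show ?thesis using less.hyps[OF lt box NE' ba less.prems(4)] that by blast
      qed
      obtain rest where rest: "ps = (a - 1, c) # rest" using ps(2,3) by (cases ps) auto
      have "chainl ((a, c) # ps)" using ps(1) rest True by (simp add: chainl_Cons2 stp_def)
      moreover have "C \<subseteq> set ((a, c) # ps)" using ps(5) unfolding C'_def by auto
      moreover have "last ((a, c) # ps) = (b, d)" using ps(2,4) by simp
      moreover have "\<forall>v\<in>set ((a, c) # ps). b \<le> fst v \<and> fst v \<le> a \<and> c \<le> snd v \<and> snd v \<le> d"
        using ps(6) less.prems(3,4) by auto
      ultimately show ?thesis by (intro exI[of _ "(a, c) # ps"]) simp
    next
      case False2: False
      have cd: "c < d"
      proof (cases "a = b")
        case True then show ?thesis using False less.prems(4) by simp
      next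
        case ab: False
        then obtain v where "v \<in> C" "fst v = a" "snd v > c" using False2 less.prems(3) by force
        then show ?thesis using less.prems(1) by force
      qed
      have box: "\<forall>v\<in>C'. b \<le> fst v \<and> fst v \<le> a \<and> c + 1 \<le> snd v \<and> snd v \<le> d"
      proof
        fix v assume v: "v \<in> C'"
        then have vC: "v \<in> C" "v \<noteq> (a, c)" unfolding C'_def by auto
        have "snd v \<noteq> c"
        proof
          assume sv: "snd v = c"
          then have "fst v \<noteq> a" using vC(2) by (auto simp: prod_eq_iff)
          then have fa: "fst v < a" using less.prems(1) vC(1) by force
          show False
          proof (cases "a = b")
            case True then show False using fa less.prems(1) vC(1) by force
          next
            case ab: False
            then obtain w where w: "w \<in> C" "fst w = a" "snd w > c" using False2 less.prems(3) by force
            then show False using less.prems(2) vC(1) fa sv by force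
          qed
        qed
        then show "b \<le> fst v \<and> fst v \<le> a \<and> c + 1 \<le> snd v \<and> snd v \<le> d" using less.prems(1) vC(1) by force
      qed
      have lt: "(a - b) + (d - (c + 1)) < (a - b) + (d - c)" using cd by arith
      obtain ps where ps: "chainl ps" "ps \<noteq> []" "hd ps = (a, c + 1)" "last ps = (b, d)" "C' \<subseteq> set ps"
          "\<forall>v\<in>set ps. b \<le> fst v \<and> fst v \<le> a \<and> c + 1 \<le> snd v \<and> snd v \<le> d"
      proof -
        have cd1: "c + 1 \<le> d" using cd by simp
        show ?thesis using less.hyps[OF lt box NE' less.prems(3) cd1] that by blast
      qed
      obtain rest where rest: "ps = (a, c + 1) # rest" using ps(2,3) by (cases ps) auto
      have "chainl ((a, c) # ps)" using ps(1) rest by (simp add: chainl_Cons2 stp_def)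
      moreover have "C \<subseteq> set ((a, c) # ps)" using ps(5) unfolding C'_def by auto
      moreover have "last ((a, c) # ps) = (b, d)" using ps(2,4) by simp
      moreover have "\<forall>v\<in>set ((a, c) # ps). b \<le> fst v \<and> fst v \<le> a \<and> c \<le> snd v \<and> snd v \<le> d"
        using ps(6) less.prems(3,4) by auto
      ultimately show ?thesis by (intro exI[of _ "(a, c) # ps"]) simp
    qed
  qed
qed


lemma is_path_iff: "is_path Q a b S \<longleftrightarrow> (\<exists>ps. chainl ps \<and> ps \<noteq> [] \<and> hd ps = a \<and> last ps = b \<and> set ps = S \<and> S \<subseteq> Q)"
  unfolding is_path_def chainl_def stp_def by auto

lemma mono_seq:
  assumes "\<forall>k<r. g (Suc k) \<le> (g k :: nat)" "i \<le> j" "j \<le> r"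
  shows "g j \<le> g i"
  using assms(2,3)
proof (induction j)
  case 0 then show ?case by simp
next
  case (Suc j)
  show ?case
  proof (cases "i = Suc j")
    case False
    then have "i \<le> j" using Suc.prems by simp
    then have "g j \<le> g i" using Suc by simp
    moreover have "g (Suc j) \<le> g j" using assms(1) Suc.prems by simp
    ultimately show ?thesis by simp
  qed simp
qed

lemma kf_jf_block:
  assumes "1 \<le> j" "j \<le> n"
  shows "kf n (i, K * n + j) = K" "jf n (i, K * n + j) = j - 1"
proof -
  have e: "K * n + j - 1 = K * n + (j - 1)" using assms by simp
  have "j - 1 < n" using assms by simp
  then show "kf n (i, K * n + j) = K" "jf n (i, K * n + j) = j - 1"
    unfolding kf_def jf_def using e by simp_all
qed

definition valid :: "nat \<Rightarrow> nat \<Rightarrow> nat \<Rightarrow> (nat \<Rightarrow> nat) \<Rightarrow> (nat \<Rightarrow> nat) \<Rightarrow> (nat \<Rightarrow> vtx set) \<Rightarrow> bool" where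
  "valid m n r g h S \<longleftrightarrow>
       g 0 = m \<and> g r = 1 \<and> (\<forall>k<r. g (Suc k) \<le> g k) \<and>
       h 0 = n \<and> h r = 1 \<and> (\<forall>k<r. h (Suc k) \<le> h k) \<and>
       (\<forall>k\<in>{1..r}. is_path (vertex_set m n r)
             (g (k - 1), (k - 1) * n + h k) (g k, (k - 1) * n + h (k - 1)) (S k))"

context setting2
begin

lemma valid_facts:
  assumes V: "valid m n r g h S"
  shows "\<And>k. k \<le> r \<Longrightarrow> 1 \<le> g k \<and> g k \<le> m \<and> 1 \<le> h k \<and> h k \<le> n"
    and "\<And>i j. i \<le> j \<Longrightarrow> j \<le> r \<Longrightarrow> g j \<le> g i \<and> h j \<le> h i"
    and "\<And>k v. k \<in> {1..r} \<Longrightarrow> v \<in> S k \<Longrightarrow> g k \<le> fst v \<and> fst v \<le> g (k - 1) \<and>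
          kf n v = k - 1 \<and> h k \<le> jf n v + 1 \<and> jf n v + 1 \<le> h (k - 1) \<and> snd v = (k - 1) * n + (jf n v + 1)"
    and "\<And>k. k \<in> {1..r} \<Longrightarrow> (g (k - 1), (k - 1) * n + h k) \<in> S k \<and> (g k, (k - 1) * n + h (k - 1)) \<in> S k"
    and "\<And>k v w. k \<in> {1..r} \<Longrightarrow> v \<in> S k \<Longrightarrow> w \<in> S k \<Longrightarrow> \<not> (fst v < fst w \<and> snd v < snd w)"
    and "\<And>k. k \<in> {1..r} \<Longrightarrow> S k \<subseteq> P"
proof -
  have gm: "\<forall>k<r. g (Suc k) \<le> g k" and hm: "\<forall>k<r. h (Suc k) \<le> h k"
    and g0: "g 0 = m" "g r = 1" and h0: "h 0 = n" "h r = 1" using V unfolding valid_def by auto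
  show mono: "\<And>i j. i \<le> j \<Longrightarrow> j \<le> r \<Longrightarrow> g j \<le> g i \<and> h j \<le> h i"
    using mono_seq[OF gm] mono_seq[OF hm] by blast
  show bnd: "\<And>k. k \<le> r \<Longrightarrow> 1 \<le> g k \<and> g k \<le> m \<and> 1 \<le> h k \<and> h k \<le> n"
  proof -
    fix k assume "k \<le> r"
    then show "1 \<le> g k \<and> g k \<le> m \<and> 1 \<le> h k \<and> h k \<le> n"
      using mono[of k r] mono[of 0 k] g0 h0 by simp
  qed
  have pth: "\<And>k. k \<in> {1..r} \<Longrightarrow> \<exists>ps. chainl ps \<and> ps \<noteq> [] \<and> hd ps = (g (k - 1), (k - 1) * n + h k)
     \<and> last ps = (g k, (k - 1) * n + h (k - 1)) \<and> set ps = S k \<and> S k \<subseteq> P"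
    using V unfolding valid_def is_path_iff by blast
  show "\<And>k. k \<in> {1..r} \<Longrightarrow> S k \<subseteq> P" using pth by blast
  show "\<And>k. k \<in> {1..r} \<Longrightarrow> (g (k - 1), (k - 1) * n + h k) \<in> S k \<and> (g k, (k - 1) * n + h (k - 1)) \<in> S k"
  proof -
    fix k assume k: "k \<in> {1..r}"
    then obtain ps where ps: "chainl ps" "ps \<noteq> []" "hd ps = (g (k - 1), (k - 1) * n + h k)"
      "last ps = (g k, (k - 1) * n + h (k - 1))" "set ps = S k" using pth by blast
    then show "(g (k - 1), (k - 1) * n + h k) \<in> S k \<and> (g k, (k - 1) * n + h (k - 1)) \<in> S k"
      by (metis hd_in_set last_in_set)
  qed
  show "\<And>k v w. k \<in> {1..r} \<Longrightarrow> v \<in> S k \<Longrightarrow> w \<in> S k \<Longrightarrow> \<not> (fst v < fst w \<and> snd v < snd w)"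
  proof -
    fix k v w assume k: "k \<in> {1..r}" and "v \<in> S k" "w \<in> S k"
    moreover obtain ps where ps: "chainl ps" "set ps = S k" using pth[OF k] by blast
    ultimately show "\<not> (fst v < fst w \<and> snd v < snd w)" using path_chain[OF ps(1)] by simp
  qed
  show "\<And>k v. k \<in> {1..r} \<Longrightarrow> v \<in> S k \<Longrightarrow> g k \<le> fst v \<and> fst v \<le> g (k - 1) \<and>
          kf n v = k - 1 \<and> h k \<le> jf n v + 1 \<and> jf n v + 1 \<le> h (k - 1) \<and> snd v = (k - 1) * n + (jf n v + 1)"
  proof -
    fix k v assume k: "k \<in> {1..r}" and v: "v \<in> S k"
    obtain ps where ps: "chainl ps" "ps \<noteq> []" "hd ps = (g (k - 1), (k - 1) * n + h k)"
      "last ps = (g k, (k - 1) * n + h (k - 1))" "set ps = S k" using pth[OF k] by blast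
    have b: "fst v \<le> g (k - 1)" "(k - 1) * n + h k \<le> snd v" "g k \<le> fst v" "snd v \<le> (k - 1) * n + h (k - 1)"
      using path_box[OF ps(1,2), of v] ps v by auto
    have hb: "1 \<le> h k" "h (k - 1) \<le> n" using bnd[of k] bnd[of "k - 1"] k by auto
    define j where "j = snd v - (k - 1) * n"
    have j: "snd v = (k - 1) * n + j" "1 \<le> j" "j \<le> n" "h k \<le> j" "j \<le> h (k - 1)"
      using b hb unfolding j_def by auto
    obtain i where "v = (i, snd v)" by (cases v) auto
    then have "kf n v = k - 1" "jf n v = j - 1" using kf_jf_block[OF j(2,3), of i "k - 1"] j(1) by metis+
    then show "g k \<le> fst v \<and> fst v \<le> g (k - 1) \<and>
          kf n v = k - 1 \<and> h k \<le> jf n v + 1 \<and> jf n v + 1 \<le> h (k - 1) \<and> snd v = (k - 1) * n + (jf n v + 1)"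
      using b j by simp
  qed
qed

end


context setting2
begin

lemma union_indep:
  assumes V: "valid m n r g h S"
  shows "indep m n r (\<Union>k\<in>{1..r}. S k)"
  unfolding indep_def
proof (intro ballI)
  fix v w assume "v \<in> (\<Union>k\<in>{1..r}. S k)" "w \<in> (\<Union>k\<in>{1..r}. S k)"
  then obtain k k' where k: "k \<in> {1..r}" "v \<in> S k" and k': "k' \<in> {1..r}" "w \<in> S k'" by blast
  have vP: "v \<in> P" and wP: "w \<in> P" using valid_facts(6)[OF V] k k' by blast+
  note fv = valid_facts(3)[OF V k] and fw = valid_facts(3)[OF V k']
  note di = dp_iff[OF m1 n1 vP wP]
  show "\<not> dp m n r v w"
  proof (cases k k' rule: linorder_cases)
    case equal
    have "\<not> (fst v < fst w \<and> snd v < snd w)" using valid_facts(5)[OF V k(1) k(2)] k'(2) equal by simp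
    then show ?thesis using di fv fw equal by auto
  next
    case less
    have "g (k' - 1) \<le> g k \<and> h (k' - 1) \<le> h k" using valid_facts(2)[OF V, of k "k' - 1"] less k' by simp
    then have "fst w \<le> fst v" "jf n w \<le> jf n v" using fv fw by auto
    moreover have "kf n v < kf n w"
    proof -
      have "1 \<le> k" using k(1) by simp
      moreover have "kf n v = k - 1" "kf n w = k' - 1" using fv fw by simp_all
      ultimately show ?thesis using less by linarith
    qed
    ultimately show ?thesis using di by auto
  next
    case greater
    have "kf n w < kf n v"
    proof -
      have "1 \<le> k'" using k'(1) by simp
      moreover have "kf n v = k - 1" "kf n w = k' - 1" using fv fw by simp_all
      ultimately show ?thesis using greater by linarith
    qed
    moreover have "1 \<le> snd v" "1 \<le> snd w" using vP wP unfolding vertex_set_def by auto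
    ultimately have "snd w < snd v" using kf_lt_snd[of w v n] n1 by simp
    then show ?thesis using di \<open>kf n w < kf n v\<close> by auto
  qed
qed

lemma union_max:
  assumes V: "valid m n r g h S" and vP: "v \<in> P" and vU: "v \<notin> (\<Union>k\<in>{1..r}. S k)"
  shows "\<exists>w\<in>(\<Union>k\<in>{1..r}. S k). dp m n r v w \<or> dp m n r w v"
proof -
  obtain i x where v: "v = (i, x)" by (cases v)
  have ib: "1 \<le> i" "i \<le> m" "1 \<le> x" using vP v unfolding vertex_set_def by auto
  define kv where "kv = kf n v"
  define jv where "jv = jf n v"
  have kvr: "kv < r" using kf_bound vP v unfolding kv_def by simp
  have jvn: "jv < n" unfolding jv_def jf_def using n1 by simp
  have xe: "x = kv * n + jv + 1" using snd_decomp[of v n] ib v unfolding kv_def jv_def by simp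
  define k where "k = kv + 1"
  have kr: "k \<in> {1..r}" using kvr unfolding k_def by simp
  have gm: "g 0 = m" "g r = 1" "h 0 = n" "h r = 1" using V unfolding valid_def by auto
  note bnd = valid_facts(1)[OF V]
  note ends = valid_facts(4)[OF V]
  note SP = valid_facts(6)[OF V]
  have U: "\<And>k' w. k' \<in> {1..r} \<Longrightarrow> w \<in> S k' \<Longrightarrow> w \<in> (\<Union>k\<in>{1..r}. S k)" by blast
  consider (c1) "g kv < i" | (c2) "i < g k" | (c3) "h kv < jv + 1" | (c4) "jv + 1 < h k"
    | (c5) "g k \<le> i" "i \<le> g kv" "h k \<le> jv + 1" "jv + 1 \<le> h kv" by linarith
  then show ?thesis
  proof cases
    case c1
    then have kv1: "1 \<le> kv" using gm ib by (cases kv) auto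
    have kvr': "kv \<in> {1..r}" using kv1 kvr by simp
    define w where "w = (g kv, (kv - 1) * n + h (kv - 1))"
    have wS: "w \<in> S kv" using ends[OF kvr'] unfolding w_def by simp
    have wP: "w \<in> P" using SP[OF kvr'] wS by blast
    have "h (kv - 1) \<le> n" using bnd[of "kv - 1"] kvr by simp
    then have "(kv - 1) * n + h (kv - 1) \<le> kv * n" using kv1 by (cases kv) (auto simp: algebra_simps)
    then have "snd w < x" using xe unfolding w_def by simp
    moreover have "fst w < i" using c1 unfolding w_def by simp
    ultimately have "dp m n r w v" using dp_iff[OF m1 n1 wP vP] v by simp
    then show ?thesis using U[OF kvr' wS] by blast
  next
    case c2
    then have kr1: "k < r" using gm ib kvr by (cases "k = r") (auto simp: k_def)
    have kr': "k + 1 \<in> {1..r}" using kr1 by simp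
    define w where "w = (g k, k * n + h (k + 1))"
    have wS: "w \<in> S (k + 1)" using ends[OF kr'] unfolding w_def by simp
    have wP: "w \<in> P" using SP[OF kr'] wS by blast
    have "1 \<le> h (k + 1)" using bnd[of "k + 1"] kr1 by simp
    moreover have "x \<le> k * n" using xe jvn unfolding k_def by (simp add: algebra_simps)
    ultimately have "x < snd w" unfolding w_def by simp
    moreover have "i < fst w" using c2 unfolding w_def by simp
    ultimately have "dp m n r v w" using dp_iff[OF m1 n1 vP wP] v by simp
    then show ?thesis using U[OF kr' wS] by blast
  next
    case c3
    then have kv1: "1 \<le> kv" using gm jvn by (cases kv) auto
    have kvr': "kv \<in> {1..r}" using kv1 kvr by simp
    define w where "w = (g (kv - 1), (kv - 1) * n + h kv)"
    have wS: "w \<in> S kv" using ends[OF kvr'] unfolding w_def by simp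
    have wP: "w \<in> P" using SP[OF kvr'] wS by blast
    have hb: "1 \<le> h kv" "h kv \<le> n" using bnd[of kv] kvr by auto
    have "kf n w = kv - 1" "jf n w = h kv - 1" using kf_jf_block[OF hb] unfolding w_def by auto
    then have "kf n w < kf n v" "jf n w < jf n v" using kv1 c3 hb unfolding kv_def jv_def by auto
    then have "dp m n r w v" using dp_iff[OF m1 n1 wP vP] by simp
    then show ?thesis using U[OF kvr' wS] by blast
  next
    case c4
    then have kr1: "k < r" using gm jvn kvr by (cases "k = r") (auto simp: k_def)
    have kr': "k + 1 \<in> {1..r}" using kr1 by simp
    define w where "w = (g (k + 1), k * n + h k)"
    have wS: "w \<in> S (k + 1)" using ends[OF kr'] unfolding w_def by simp
    have wP: "w \<in> P" using SP[OF kr'] wS by blast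
    have hb: "1 \<le> h k" "h k \<le> n" using bnd[of k] kr1 by auto
    have "kf n w = k" "jf n w = h k - 1" using kf_jf_block[OF hb] unfolding w_def by auto
    then have "kf n v < kf n w" "jf n v < jf n w" using c4 unfolding kv_def jv_def k_def by auto
    then have "dp m n r v w" using dp_iff[OF m1 n1 vP wP] by simp
    then show ?thesis using U[OF kr' wS] by blast
  next
    case c5
    have ip: "is_path P (g (k - 1), (k - 1) * n + h k) (g k, (k - 1) * n + h (k - 1)) (S k)"
      using V kr unfolding valid_def by blast
    have k1: "k - 1 = kv" by (simp add: k_def)
    obtain ps where ps: "chainl ps" "ps \<noteq> []" "hd ps = (g kv, kv * n + h k)"
      "last ps = (g k, kv * n + h kv)" "set ps = S k"
      using ip unfolding is_path_iff k1 by blast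
    have "v \<notin> S k" using vU kr by blast
    then have nin: "(i, x) \<notin> set ps" using ps(5) v by simp
    obtain w where w: "w \<in> set ps" "(fst w < i \<and> snd w < x) \<or> (i < fst w \<and> x < snd w)"
      using path_gap[OF ps(1-4) c5(1,2) _ _ nin] c5(3,4) xe by auto
    have wS: "w \<in> S k" using w ps(5) by simp
    have wP: "w \<in> P" using SP[OF kr] wS by blast
    have "dp m n r w v \<or> dp m n r v w" using w(2) dp_iff[OF m1 n1 wP vP] dp_iff[OF m1 n1 vP wP] v by auto
    then show ?thesis using U[OF kr wS] by blast
  qed
qed

end


context setting2
begin

lemma extend:
  assumes FP: "F \<subseteq> P" and ind: "indep m n r F"
  shows "\<exists>g h S. valid m n r g h S \<and> F \<subseteq> (\<Union>k\<in>{1..r}. S k)"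
proof -
  have finF: "finite F" using FP finite_P finite_subset by blast
  define G where "G k = insert m (fst ` {p\<in>F. kf n p < k})" for k
  define H where "H k = insert n ((\<lambda>p. jf n p + 1) ` {p\<in>F. kf n p < k})" for k
  define g where "g k = (if k = 0 then m else if r \<le> k then 1 else Min (G k))" for k
  define h where "h k = (if k = 0 then n else if r \<le> k then 1 else Min (H k))" for k
  have finG: "finite (G k)" "G k \<noteq> {}" "m \<in> G k" for k unfolding G_def using finF by auto
  have finH: "finite (H k)" "H k \<noteq> {}" "n \<in> H k" for k unfolding H_def using finF by auto
  have Fb: "\<And>p. p \<in> F \<Longrightarrow> 1 \<le> fst p \<and> fst p \<le> m \<and> 1 \<le> snd p \<and> snd p \<le> n * r \<and> jf n p + 1 \<le> n \<and> kf n p < r"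
  proof -
    fix p assume p: "p \<in> F"
    then have pP: "p \<in> P" using FP by blast
    obtain i x where "p = (i, x)" by (cases p)
    moreover have "jf n p < n" unfolding jf_def using n1 by simp
    ultimately show "1 \<le> fst p \<and> fst p \<le> m \<and> 1 \<le> snd p \<and> snd p \<le> n * r \<and> jf n p + 1 \<le> n \<and> kf n p < r"
      using pP kf_bound[of i x m n r] n1 unfolding vertex_set_def by auto
  qed
  have Gge: "\<forall>a\<in>G k. 1 \<le> a" for k unfolding G_def using Fb m1 by auto
  have Hge: "\<forall>a\<in>H k. 1 \<le> a" for k unfolding H_def using n1 by auto
  have gb: "1 \<le> g k \<and> g k \<le> m" for k
  proof -
    have "Min (G k) \<in> G k" using finG by (intro Min_in) auto
    then have "1 \<le> Min (G k)" using Gge by blast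
    moreover have "Min (G k) \<le> m" using finG by simp
    ultimately show ?thesis unfolding g_def using m1 by auto
  qed
  have hb: "1 \<le> h k \<and> h k \<le> n" for k
  proof -
    have "Min (H k) \<in> H k" using finH by (intro Min_in) auto
    then have "1 \<le> Min (H k)" using Hge by blast
    moreover have "Min (H k) \<le> n" using finH by simp
    ultimately show ?thesis unfolding h_def using n1 by auto
  qed
  have gmono: "\<forall>k<r. g (Suc k) \<le> g k"
  proof (intro allI impI)
    fix k assume k: "k < r"
    show "g (Suc k) \<le> g k"
    proof (cases "r \<le> Suc k")
      case True then show ?thesis using gb[of k] unfolding g_def by simp
    next
      case False
      have "G k \<subseteq> G (Suc k)" unfolding G_def by auto
      then have "Min (G (Suc k)) \<le> Min (G k)" using finG by (intro Min_antimono) auto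
      moreover have "Min (G (Suc k)) \<le> m" using finG by simp
      ultimately show ?thesis using False unfolding g_def by auto
    qed
  qed
  have hmono: "\<forall>k<r. h (Suc k) \<le> h k"
  proof (intro allI impI)
    fix k assume k: "k < r"
    show "h (Suc k) \<le> h k"
    proof (cases "r \<le> Suc k")
      case True then show ?thesis using hb[of k] unfolding h_def by simp
    next
      case False
      have "H k \<subseteq> H (Suc k)" unfolding H_def by auto
      then have "Min (H (Suc k)) \<le> Min (H k)" using finH by (intro Min_antimono) auto
      moreover have "Min (H (Suc k)) \<le> n" using finH by simp
      ultimately show ?thesis using False unfolding h_def by auto
    qed
  qed
  have low: "g (kf n p + 1) \<le> fst p \<and> h (kf n p + 1) \<le> jf n p + 1" if p: "p \<in> F" for p
  proof (cases "r \<le> kf n p + 1")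
    case True then show ?thesis using Fb[OF p] unfolding g_def h_def by simp
  next
    case False
    have "fst p \<in> G (kf n p + 1)" "jf n p + 1 \<in> H (kf n p + 1)" unfolding G_def H_def using p by auto
    then have "Min (G (kf n p + 1)) \<le> fst p" "Min (H (kf n p + 1)) \<le> jf n p + 1" using finG finH by simp_all
    then show ?thesis using False unfolding g_def h_def by simp
  qed
  have high: "fst p \<le> g (kf n p) \<and> jf n p + 1 \<le> h (kf n p)" if p: "p \<in> F" for p
  proof (cases "kf n p = 0")
    case True then show ?thesis using Fb[OF p] unfolding g_def h_def by simp
  next
    case False
    have kr: "\<not> r \<le> kf n p" using Fb[OF p] by simp
    have pP: "p \<in> P" using p FP by blast
    have c: "fst p \<le> fst q \<and> jf n p \<le> jf n q" if q: "q \<in> F" "kf n q < kf n p" for q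
    proof -
      have qP: "q \<in> P" using q FP by blast
      have nd: "\<not> dp m n r q p" using ind q(1) p unfolding indep_def by blast
      have "1 \<le> snd q" "1 \<le> snd p" using qP pP unfolding vertex_set_def by auto
      then have "snd q < snd p" using kf_lt_snd[OF _ _ q(2) n1] by simp
      then show ?thesis using nd dp_iff[OF m1 n1 qP pP] q(2) by auto
    qed
    have "\<forall>a\<in>G (kf n p). fst p \<le> a" unfolding G_def using Fb[OF p] c by auto
    then have "fst p \<le> Min (G (kf n p))" using finG by simp
    moreover have "\<forall>a\<in>H (kf n p). jf n p + 1 \<le> a" unfolding H_def using Fb[OF p] c by fastforce
    then have "jf n p + 1 \<le> Min (H (kf n p))" using finH by simp
    ultimately show ?thesis using False kr unfolding g_def h_def by simp
  qed
  define C where "C k = {p \<in> F. kf n p = k - 1}" for k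
  have paths: "\<forall>k\<in>{1..r}. \<exists>T. is_path P (g (k - 1), (k - 1) * n + h k) (g k, (k - 1) * n + h (k - 1)) T \<and> C k \<subseteq> T"
  proof
    fix k assume k: "k \<in> {1..r}"
    have kk: "k - 1 < r" "Suc (k - 1) = k" using k by auto
    have bx: "\<forall>v\<in>C k. g k \<le> fst v \<and> fst v \<le> g (k - 1) \<and> (k - 1) * n + h k \<le> snd v \<and> snd v \<le> (k - 1) * n + h (k - 1)"
    proof
      fix v assume v: "v \<in> C k"
      then have vF: "v \<in> F" and kv: "kf n v = k - 1" unfolding C_def by auto
      have sv: "snd v = kf n v * n + jf n v + 1" using snd_decomp[of v n] Fb[OF vF] by simp
      have kv1: "kf n v + 1 = k" using kv k by simp
      show "g k \<le> fst v \<and> fst v \<le> g (k - 1) \<and> (k - 1) * n + h k \<le> snd v \<and> snd v \<le> (k - 1) * n + h (k - 1)"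
        using low[OF vF] high[OF vF] sv kv kv1 by simp
    qed
    have ne: "\<forall>v\<in>C k. \<forall>w\<in>C k. \<not> (fst v < fst w \<and> snd v < snd w)"
    proof (intro ballI)
      fix v w assume "v \<in> C k" "w \<in> C k"
      then have "v \<in> F" "w \<in> F" unfolding C_def by auto
      then have "\<not> dp m n r v w" "v \<in> P" "w \<in> P" using ind FP unfolding indep_def by auto
      then show "\<not> (fst v < fst w \<and> snd v < snd w)" using dp_iff[OF m1 n1] by blast
    qed
    have ba: "g k \<le> g (k - 1)" using gmono kk by metis
    have cd: "(k - 1) * n + h k \<le> (k - 1) * n + h (k - 1)" using hmono kk by (metis add_le_cancel_left)
    obtain ps where ps: "chainl ps" "ps \<noteq> []" "hd ps = (g (k - 1), (k - 1) * n + h k)"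
        "last ps = (g k, (k - 1) * n + h (k - 1))" "C k \<subseteq> set ps"
        "\<forall>v\<in>set ps. g k \<le> fst v \<and> fst v \<le> g (k - 1) \<and> (k - 1) * n + h k \<le> snd v \<and> snd v \<le> (k - 1) * n + h (k - 1)"
      using path_fill[OF bx ne ba cd] by blast
    have "set ps \<subseteq> P"
    proof
      fix v assume v: "v \<in> set ps"
      obtain i x where ix: "v = (i, x)" by (cases v)
      have bv: "g k \<le> i \<and> i \<le> g (k - 1) \<and> (k - 1) * n + h k \<le> x \<and> x \<le> (k - 1) * n + h (k - 1)"
        using ps(6) v ix by fastforce
      have "(k - 1) * n + h (k - 1) \<le> (k - 1) * n + n" using hb[of "k - 1"] by simp
      also have "\<dots> = k * n" using k by (cases k) auto
      also have "\<dots> \<le> r * n" using k by simp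
      finally have "x \<le> n * r" using bv by (simp add: mult.commute)
      moreover have "1 \<le> i" "i \<le> m" using bv gb[of k] gb[of "k - 1"] by auto
      moreover have "1 \<le> x" using bv hb[of k] by auto
      ultimately show "v \<in> P" using ix unfolding vertex_set_def by simp
    qed
    then have "is_path P (g (k - 1), (k - 1) * n + h k) (g k, (k - 1) * n + h (k - 1)) (set ps)"
      unfolding is_path_iff using ps by blast
    then show "\<exists>T. is_path P (g (k - 1), (k - 1) * n + h k) (g k, (k - 1) * n + h (k - 1)) T \<and> C k \<subseteq> T"
      using ps(5) by blast
  qed
  then obtain S where S: "\<forall>k\<in>{1..r}. is_path P (g (k - 1), (k - 1) * n + h k) (g k, (k - 1) * n + h (k - 1)) (S k) \<and> C k \<subseteq> S k"
    using bchoice[OF paths] by blast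
  have "valid m n r g h S" unfolding valid_def
    using S gmono hmono r1 unfolding g_def h_def by auto
  moreover have "F \<subseteq> (\<Union>k\<in>{1..r}. S k)"
  proof
    fix p assume p: "p \<in> F"
    define k where "k = kf n p + 1"
    have k: "k \<in> {1..r}" using Fb[OF p] unfolding k_def by simp
    have "p \<in> C k" unfolding C_def k_def using p by simp
    then show "p \<in> (\<Union>k\<in>{1..r}. S k)" using S k by blast
  qed
  ultimately show ?thesis by blast
qed

end


context setting2
begin

lemma main: "facet \<Delta> F \<longleftrightarrow> (\<exists>g h S. valid m n r g h S \<and> F = (\<Union>k\<in>{1..r}. S k))"
proof
  assume fc: "facet \<Delta> F"
  then have FD: "F \<in> \<Delta>" and mx: "\<forall>G\<in>\<Delta>. F \<subseteq> G \<longrightarrow> G = F" unfolding facet_def by auto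
  then have FP: "F \<subseteq> P" and ind: "indep m n r F" using delta_char by auto
  obtain g h S where V: "valid m n r g h S" and sub: "F \<subseteq> (\<Union>k\<in>{1..r}. S k)"
    using extend[OF FP ind] by blast
  have "(\<Union>k\<in>{1..r}. S k) \<subseteq> P" using valid_facts(6)[OF V] by blast
  then have "(\<Union>k\<in>{1..r}. S k) \<in> \<Delta>" using delta_char union_indep[OF V] by blast
  then have "(\<Union>k\<in>{1..r}. S k) = F" using mx sub by blast
  then show "\<exists>g h S. valid m n r g h S \<and> F = (\<Union>k\<in>{1..r}. S k)" using V by metis
next
  assume "\<exists>g h S. valid m n r g h S \<and> F = (\<Union>k\<in>{1..r}. S k)"
  then obtain g h S where V: "valid m n r g h S" and F: "F = (\<Union>k\<in>{1..r}. S k)" by blast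
  have FP: "F \<subseteq> P" using valid_facts(6)[OF V] F by blast
  have FD: "F \<in> \<Delta>" using delta_char FP union_indep[OF V] F by blast
  have "G = F" if G: "G \<in> \<Delta>" "F \<subseteq> G" for G
  proof (rule ccontr)
    assume "G \<noteq> F"
    then obtain v where v: "v \<in> G" "v \<notin> F" using G(2) by blast
    have GP: "G \<subseteq> P" and indG: "indep m n r G" using delta_char G(1) by auto
    obtain w where w: "w \<in> F" "dp m n r v w \<or> dp m n r w v"
      using union_max[OF V _ v(2)[unfolded F]] GP v(1) F by blast
    have "w \<in> G" using w(1) G(2) by blast
    then show False using indG v(1) w(2) unfolding indep_def by blast
  qed
  then show "facet \<Delta> F" unfolding facet_def using FD by blast
qed

end

theorem theorem5p4:
  fixes m n r :: nat
    and tle :: "mon \<Rightarrow> mon \<Rightarrow> bool"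
    and \<Delta> :: "vtx set set"
    and F :: "vtx set"
  assumes "1 \<le> m" and "1 \<le> n" and "1 \<le> r"
    and "term_order (vertex_set m n r) tle"
    and "diagonal_order TYPE('k::field) m n r tle"
    and "simplicial_complex (vertex_set m n r) \<Delta>"
    and "(SR_ideal (vertex_set m n r) \<Delta> :: 'k mpoly set)
           = initial_ideal (vertex_set m n r) tle (I_mnr m n r)"
  shows "facet \<Delta> F \<longleftrightarrow>
    (\<exists>g h :: nat \<Rightarrow> nat.
       g 0 = m \<and> g r = 1 \<and> (\<forall>k<r. g (Suc k) \<le> g k) \<and>
       h 0 = n \<and> h r = 1 \<and> (\<forall>k<r. h (Suc k) \<le> h k) \<and>
       (\<exists>S :: nat \<Rightarrow> vtx set.
          (\<forall>k\<in>{1..r}. is_path (vertex_set m n r)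
             (g (k - 1), (k - 1) * n + h k) (g k, (k - 1) * n + h (k - 1)) (S k)) \<and>
          F = (\<Union>k\<in>{1..r}. S k)))"
proof -
  interpret setting2 m n r tle "TYPE('k)" \<Delta>
    by unfold_locales (use assms in auto)
  show ?thesis unfolding main valid_def by blast
qed


end
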